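(* Let $p>2$ and let $G_2$ be the spider graph consisting of a center $v_0$ and three legs $v_0x_1x_2\cdots x_p$, $v_0y_1y_2\cdots y_p$, $v_0z_1z_2\cdots z_p$ (paths with $p$ vertices each besides $v_0$); write $x_0=y_0=z_0=v_0$. Let $H_1,\dots,H_{3p}$ be connected graphs, each with at least two vertices, with $m_i=|V(H_i)|$ ordered so that $m_1\le m_2\le\dots\le m_{3p}$. Let $\Gamma=G_2\diamond(H_1,\dots,H_{3p})$ be the generalized edge corona in which, for each $k\in\{0,1,\dots,p-1\}$, every vertex of $H_{3k+1}$ is joined to $x_{p-k}$ and $x_{p-k-1}$, every vertex of $H_{3k+2}$ is joined to $y_{p-k}$ and $y_{p-k-1}$, and every vertex of $H_{3k+3}$ is joined to $z_{p-k}$ and $z_{p-k-1}$ (so $H_{3p-3}$ is the graph joined to $z_1$ and $z_2$, and $H_{3p-2}$ is the graph joined to $x_1$ and $v_0$). Suppose that (i) $\Delta(H_i)\le\delta(H_{i+1})$ for all $i\in\{1,\dots,3p-1\}$; (ii) $d'(x_p)\le\delta'(H_2)$, $d'(y_p)\le\delta'(H_3)$ and $d'(z_p)\le\delta'(H_4)$; (iii) $\Delta'(H_{3p-3})\le |V(H_4)|+1$; (iv) $d'(z_2)\le\delta'(H_{3p-2})$. Then $\Gamma$ is antimagic.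
   Context: All graphs are simple and undirected. A graph $G$ is antimagic if there is a bijection $f:E(G)\to\{1,2,\dots,|E(G)|\}$ such that the vertex sums $w(v)=\sum_{e\ni v}f(e)$ are pairwise distinct over all vertices $v$. For a graph $G$ with $m$ edges $e_1,\dots,e_m$ and graphs $H_1,\dots,H_m$, the generalized edge corona $G\diamond(H_1,\dots,H_m)$ is obtained from disjoint copies of $G,H_1,\dots,H_m$ by joining both end vertices of $e_i$ to every vertex of $H_i$, for each $i$. $\Delta(H)$ and $\delta(H)$ denote the maximum and minimum degree of $H$ itself. For a vertex $v$ of $\Gamma$, $d'(v)$ denotes its degree in $\Gamma$; $\Delta'(H_i)$ and $\delta'(H_i)$ denote the maximum and minimum of $d'(v)$ over $v\in V(H_i)$ (so $d'(v)=\deg_{H_i}(v)+2$ for $v\in V(H_i)$). *)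

theory Defs
  imports Main
begin

definition simple_graph :: "'a set \<Rightarrow> 'a set set \<Rightarrow> bool" where
  "simple_graph V E \<longleftrightarrow> finite V \<and> (\<forall>e\<in>E. \<exists>u v. u \<noteq> v \<and> u \<in> V \<and> v \<in> V \<and> e = {u, v})"

definition graph_connected :: "'a set \<Rightarrow> 'a set set \<Rightarrow> bool" where
  "graph_connected V E \<longleftrightarrow> (\<forall>u\<in>V. \<forall>v\<in>V. (u, v) \<in> {(x, y). {x, y} \<in> E}\<^sup>*)"

definition degree :: "'a set set \<Rightarrow> 'a \<Rightarrow> nat" where
  "degree E v = card {e \<in> E. v \<in> e}"

definition max_degree :: "'a set \<Rightarrow> 'a set set \<Rightarrow> nat" where
  "max_degree V E = Max (degree E ` V)"

definition min_degree :: "'a set \<Rightarrow> 'a set set \<Rightarrow> nat" where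
  "min_degree V E = Min (degree E ` V)"

definition vertex_sum :: "'a set set \<Rightarrow> ('a set \<Rightarrow> nat) \<Rightarrow> 'a \<Rightarrow> nat" where
  "vertex_sum E f v = (\<Sum>e\<in>{e \<in> E. v \<in> e}. f e)"

definition antimagic :: "'a set \<Rightarrow> 'a set set \<Rightarrow> bool" where
  "antimagic V E \<longleftrightarrow> (\<exists>f. bij_betw f E {1..card E} \<and> inj_on (vertex_sum E f) V)"

text \<open>Spider G_2: centre v_0 = Inl (0,0); leg l (0 = x, 1 = y, 2 = z) has vertices
  Inl (l, j) for 1 \<le> j \<le> p; position 0 on every leg is the centre.
  The copy of vertex v of H_i is Inr (i, v).\<close>

definition spv :: "nat \<Rightarrow> nat \<Rightarrow> (nat \<times> nat) + (nat \<times> 'a)" where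
  "spv l j = (if j = 0 then Inl (0, 0) else Inl (l, j))"

text \<open>H_i with i = 3k + l + 1 (k < p, l < 3) is joined to positions p - k and p - k - 1 on leg l.\<close>

definition att_leg :: "nat \<Rightarrow> nat" where "att_leg i = (i - 1) mod 3"
definition att_pos :: "nat \<Rightarrow> nat \<Rightarrow> nat" where "att_pos p i = p - (i - 1) div 3"

definition corona_V :: "nat \<Rightarrow> (nat \<Rightarrow> 'a set) \<Rightarrow> ((nat \<times> nat) + (nat \<times> 'a)) set" where
  "corona_V p VH = {spv l j | l j. l < 3 \<and> j \<le> p} \<union> {Inr (i, v) | i v. i \<in> {1..3*p} \<and> v \<in> VH i}"

definition corona_E :: "nat \<Rightarrow> (nat \<Rightarrow> 'a set) \<Rightarrow> (nat \<Rightarrow> 'a set set)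
    \<Rightarrow> ((nat \<times> nat) + (nat \<times> 'a)) set set" where
  "corona_E p VH EH =
     {{spv l j, spv l (Suc j)} | l j. l < 3 \<and> j < p}
   \<union> {{Inr (i, u), Inr (i, v)} | i u v. i \<in> {1..3*p} \<and> {u, v} \<in> EH i}
   \<union> {{Inr (i, v), spv (att_leg i) (att_pos p i)} | i v. i \<in> {1..3*p} \<and> v \<in> VH i}
   \<union> {{Inr (i, v), spv (att_leg i) (att_pos p i - 1)} | i v. i \<in> {1..3*p} \<and> v \<in> VH i}"

definition max_degree' :: "nat \<Rightarrow> (nat \<Rightarrow> 'a set) \<Rightarrow> (nat \<Rightarrow> 'a set set) \<Rightarrow> nat \<Rightarrow> nat" where
  "max_degree' p VH EH i = Max ((\<lambda>v. degree (corona_E p VH EH) (Inr (i, v))) ` VH i)"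

definition min_degree' :: "nat \<Rightarrow> (nat \<Rightarrow> 'a set) \<Rightarrow> (nat \<Rightarrow> 'a set set) \<Rightarrow> nat \<Rightarrow> nat" where
  "min_degree' p VH EH i = Min ((\<lambda>v. degree (corona_E p VH EH) (Inr (i, v))) ` VH i)"

end

theory Submission
  imports Defs "HOL-Library.Product_Lexorder"
begin

lemma rank_props:
  fixes key :: "'x \<Rightarrow> 'k::linorder"
  assumes fin: "finite K" and inj: "inj_on key K"
  shows "bij_betw (\<lambda>k. card {k'\<in>K. key k' < key k} + 1) K {1..card K}"
    and "k \<in> K \<Longrightarrow> k' \<in> K \<Longrightarrow> key k < key k' \<Longrightarrow>
         card {x\<in>K. key x < key k} + 1 < card {x\<in>K. key x < key k'} + 1"
proof -
  have mono: "card {x\<in>K. key x < key k} < card {x\<in>K. key x < key k'}"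
    if "k \<in> K" "k' \<in> K" "key k < key k'" for k k'
  proof -
    have s1: "{x\<in>K. key x < key k} \<subseteq> {x\<in>K. key x < key k'}"
      using that(3) by (auto intro: less_trans)
    have s2: "k \<in> {x\<in>K. key x < key k'}" "k \<notin> {x\<in>K. key x < key k}" using that by auto
    have "{x\<in>K. key x < key k} \<subset> {x\<in>K. key x < key k'}"
      using s1 s2 by blast
    moreover have "finite {x\<in>K. key x < key k'}" using fin by simp
    ultimately show ?thesis by (simp add: psubset_card_mono)
  qed
  then show "k \<in> K \<Longrightarrow> k' \<in> K \<Longrightarrow> key k < key k' \<Longrightarrow>
         card {x\<in>K. key x < key k} + 1 < card {x\<in>K. key x < key k'} + 1" by simp
  let ?r = "\<lambda>k. card {k'\<in>K. key k' < key k} + 1"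
  have injr: "inj_on ?r K"
  proof (rule inj_onI)
    fix a b assume ab: "a \<in> K" "b \<in> K" "?r a = ?r b"
    show "a = b"
    proof (rule ccontr)
      assume "a \<noteq> b"
      then have "key a \<noteq> key b" using inj ab by (meson inj_on_def)
      then have "key a < key b \<or> key b < key a" by auto
      then show False
      proof
        assume "key a < key b"
        then have "?r a < ?r b" using mono[OF ab(1,2)] by simp
        then show False using ab(3) by simp
      next
        assume "key b < key a"
        then have "?r b < ?r a" using mono[OF ab(2,1)] by simp
        then show False using ab(3) by simp
      qed
    qed
  qed
  have sub: "?r ` K \<subseteq> {1..card K}"
  proof
    fix y assume "y \<in> ?r ` K"
    then obtain k where k: "k \<in> K" "y = ?r k" by auto
    have "{k'\<in>K. key k' < key k} \<subseteq> K - {k}" by blast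
    then have "card {k'\<in>K. key k' < key k} \<le> card (K - {k})" using fin by (simp add: card_mono)
    also have "\<dots> = card K - 1" using k fin by simp
    finally have c: "card {k'\<in>K. key k' < key k} \<le> card K - 1" .
    have "card K > 0" using k fin card_gt_0_iff by blast
    then show "y \<in> {1..card K}" using k(2) c by simp
  qed
  have "card (?r ` K) = card {1..card K}" using injr by (simp add: card_image)
  then have "?r ` K = {1..card K}" using sub by (simp add: card_subset_eq)
  then show "bij_betw ?r K {1..card K}" using injr by (simp add: bij_betw_def)
qed

lemma dom_sum:
  fixes g :: "'x \<Rightarrow> nat"
  assumes "finite A" "finite B" "card A \<le> card B" "B \<noteq> {}"
    and lt: "\<And>a b. a \<in> A \<Longrightarrow> b \<in> B \<Longrightarrow> g a < g b"
    and pos: "\<And>b. b \<in> B \<Longrightarrow> 0 < g b"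
  shows "sum g A < sum g B"
proof -
  define m where "m = Min (g ` B)"
  have mB: "\<And>b. b \<in> B \<Longrightarrow> m \<le> g b" using assms unfolding m_def by auto
  have mA: "\<And>a. a \<in> A \<Longrightarrow> g a + 1 \<le> m"
  proof -
    fix a assume "a \<in> A"
    have "m \<in> g ` B" unfolding m_def using assms by auto
    then show "g a + 1 \<le> m" using lt \<open>a \<in> A\<close> by (fastforce simp: Suc_le_eq)
  qed
  have "sum (\<lambda>a. g a + 1) A \<le> card A * m" using mA sum_bounded_above[of A "\<lambda>a. g a + 1" m] by simp
  also have "\<dots> \<le> card B * m" using assms by simp
  also have "\<dots> \<le> sum g B" using mB sum_bounded_below[of B m g] by simp
  finally have *: "sum g A + card A \<le> sum g B" by (simp add: sum.distrib sum_Suc)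
  show ?thesis
  proof (cases "A = {}")
    case True
    then show ?thesis using assms pos by (simp add: sum_pos)
  next
    case False
    then have "card A > 0" using assms by auto
    then show ?thesis using * by simp
  qed
qed

lemma dom_sum_le:
  fixes g :: "'x \<Rightarrow> nat"
  assumes "finite A" "finite B" "card A \<le> card B"
    and lt: "\<And>a b. a \<in> A \<Longrightarrow> b \<in> B \<Longrightarrow> g a < g b"
  shows "sum g A \<le> sum g B"
proof (cases "B = {}")
  case True
  then show ?thesis using assms by simp
next
  case False
  define m where "m = Min (g ` B)"
  have mB: "\<And>b. b \<in> B \<Longrightarrow> m \<le> g b" using assms False unfolding m_def by auto
  have mA: "\<And>a. a \<in> A \<Longrightarrow> g a \<le> m"
  proof -
    fix a assume "a \<in> A"
    have "m \<in> g ` B" unfolding m_def using assms False by auto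
    then show "g a \<le> m" using lt \<open>a \<in> A\<close> by fastforce
  qed
  have "sum g A \<le> card A * m" using mA sum_bounded_above[of A g m] by simp
  also have "\<dots> \<le> card B * m" using assms by simp
  also have "\<dots> \<le> sum g B" using mB sum_bounded_below[of B m g] by simp
  finally show ?thesis .
qed

datatype 'a code = Sp nat nat | In nat "'a set" | Es nat 'a | Cs nat 'a

fun edge_of :: "nat \<Rightarrow> 'a code \<Rightarrow> ((nat \<times> nat) + (nat \<times> 'a)) set" where
  "edge_of p (Sp l j) = {spv l j, spv l (j - 1)}"
| "edge_of p (In i e) = (\<lambda>v. Inr (i, v)) ` e"
| "edge_of p (Es i v) = {Inr (i, v), spv (att_leg i) (att_pos p i)}"
| "edge_of p (Cs i v) = {Inr (i, v), spv (att_leg i) (att_pos p i - 1)}"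

definition codes :: "nat \<Rightarrow> (nat \<Rightarrow> 'a set) \<Rightarrow> (nat \<Rightarrow> 'a set set) \<Rightarrow> 'a code set" where
  "codes p VH EH = {Sp l j | l j. l < 3 \<and> 1 \<le> j \<and> j \<le> p}
     \<union> {In i e | i e. i \<in> {1..3*p} \<and> e \<in> EH i}
     \<union> {Es i v | i v. i \<in> {1..3*p} \<and> v \<in> VH i}
     \<union> {Cs i v | i v. i \<in> {1..3*p} \<and> v \<in> VH i}"

lemma spv_pos: "1 \<le> j \<Longrightarrow> spv l j = Inl (l, j)"
  by (simp add: spv_def)
lemma spv_0[simp]: "spv l 0 = Inl (0, 0)"
  by (simp add: spv_def)
lemma spv_Inr[simp]: "spv l j \<noteq> Inr x" "Inr x \<noteq> spv l j"
  by (auto simp: spv_def)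

lemma att_pos_bounds:
  assumes "i \<in> {1..3*p}"
  shows "1 \<le> att_pos p i" "att_pos p i \<le> p"
proof -
  have "(i - 1) div 3 < p" using assms by auto
  then show "1 \<le> att_pos p i" "att_pos p i \<le> p" unfolding att_pos_def by auto
qed

lemma att_eq:
  assumes "i \<in> {1..3*p}" "l < 3" "1 \<le> j" "j \<le> p"
  shows "(att_leg i = l \<and> att_pos p i = j) \<longleftrightarrow> i = 3*(p-j)+l+1"
proof
  assume h: "att_leg i = l \<and> att_pos p i = j"
  have "(i - 1) div 3 < p" using assms by auto
  then have "(i - 1) div 3 = p - j" using h unfolding att_pos_def by auto
  moreover have "(i-1) mod 3 = l" using h unfolding att_leg_def by auto
  moreover have "i - 1 = 3 * ((i - 1) div 3) + (i-1) mod 3" by simp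
  ultimately show "i = 3*(p-j)+l+1" using assms(1) by auto
next
  assume h: "i = 3*(p-j)+l+1"
  then have "i - 1 = 3*(p-j)+l" by simp
  then have "(i-1) div 3 = p - j" "(i-1) mod 3 = l" using assms(2) by auto
  then show "att_leg i = l \<and> att_pos p i = j" unfolding att_leg_def att_pos_def using assms by auto
qed

lemma att_cs:
  assumes "i \<in> {1..3*p}" "l < 3" "1 \<le> j" "j \<le> p"
  shows "(att_leg i = l \<and> att_pos p i - 1 = j) \<longleftrightarrow> (j < p \<and> i = 3*(p-(j+1))+l+1)"
proof -
  have b: "1 \<le> att_pos p i" "att_pos p i \<le> p" using att_pos_bounds[OF assms(1)] by auto
  show ?thesis
  proof
    assume h: "att_leg i = l \<and> att_pos p i - 1 = j"
    then have "att_pos p i = j + 1" using b assms by auto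
    then have "j < p" using b by auto
    then show "j < p \<and> i = 3*(p-(j+1))+l+1" using att_eq[OF assms(1,2), of "j+1"] h \<open>att_pos p i = j + 1\<close> by auto
  next
    assume h: "j < p \<and> i = 3*(p-(j+1))+l+1"
    then have "att_leg i = l \<and> att_pos p i = j + 1" using att_eq[OF assms(1,2), of "j+1"] by auto
    then show "att_leg i = l \<and> att_pos p i - 1 = j" by auto
  qed
qed

lemma att_v0:
  assumes "i \<in> {1..3*p}"
  shows "att_pos p i = 1 \<longleftrightarrow> 3*p - 2 \<le> i"
proof -
  have "(i - 1) div 3 < p" using assms by auto
  moreover have "(i - 1) div 3 = p - 1 \<longleftrightarrow> 3*p - 2 \<le> i"
  proof
    assume "(i - 1) div 3 = p - 1"
    then have "3 * (p - 1) \<le> i - 1" by (metis div_times_less_eq_dividend mult.commute)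
    then show "3*p - 2 \<le> i" using assms by auto
  next
    assume "3*p - 2 \<le> i"
    then have "3 * (p - 1) \<le> i - 1" using assms by auto
    then have "p - 1 \<le> (i - 1) div 3" by (metis div_le_mono nonzero_mult_div_cancel_left zero_neq_numeral)
    then show "(i - 1) div 3 = p - 1" using \<open>(i - 1) div 3 < p\<close> by auto
  qed
  ultimately show ?thesis unfolding att_pos_def by auto
qed

locale ctx =
  fixes p :: nat and VH :: "nat \<Rightarrow> 'a set" and EH :: "nat \<Rightarrow> 'a set set"
  assumes p: "p > 2"
    and graphs: "\<And>i. i \<in> {1..3*p} \<Longrightarrow> simple_graph (VH i) (EH i)"
    and two: "\<And>i. i \<in> {1..3*p} \<Longrightarrow> card (VH i) \<ge> 2"
    and sorted: "\<And>i. i \<in> {1..<3*p} \<Longrightarrow> card (VH i) \<le> card (VH (Suc i))"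
    and c1: "\<And>i. i \<in> {1..<3*p} \<Longrightarrow> max_degree (VH i) (EH i) \<le> min_degree (VH (Suc i)) (EH (Suc i))"
    and c2x: "degree (corona_E p VH EH) (spv 0 p) \<le> min_degree' p VH EH 2"
    and c2y: "degree (corona_E p VH EH) (spv 1 p) \<le> min_degree' p VH EH 3"
    and c2z: "degree (corona_E p VH EH) (spv 2 p) \<le> min_degree' p VH EH 4"
    and c3: "max_degree' p VH EH (3*p - 3) \<le> card (VH 4) + 1"
    and c4: "degree (corona_E p VH EH) (spv 2 2) \<le> min_degree' p VH EH (3*p - 2)"
begin

abbreviation "K \<equiv> codes p VH EH"
abbreviation "E \<equiv> corona_E p VH EH"

lemma finVH: "i \<in> {1..3*p} \<Longrightarrow> finite (VH i)"
  using graphs unfolding simple_graph_def by auto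

lemma edgeH: "i \<in> {1..3*p} \<Longrightarrow> e \<in> EH i \<Longrightarrow> \<exists>u v. u \<noteq> v \<and> u \<in> VH i \<and> v \<in> VH i \<and> e = {u, v}"
  using graphs unfolding simple_graph_def by auto

lemma finEH: "i \<in> {1..3*p} \<Longrightarrow> finite (EH i)"
proof -
  assume i: "i \<in> {1..3*p}"
  have "EH i \<subseteq> Pow (VH i)" using edgeH[OF i] by blast
  then show ?thesis using finVH[OF i] by (simp add: finite_subset)
qed

lemma VH_ne: "i \<in> {1..3*p} \<Longrightarrow> VH i \<noteq> {}"
  using two[of i] by auto

lemma finK: "finite K"
proof -
  have S: "K \<subseteq> (\<lambda>(l,j). Sp l j) ` ({..<3} \<times> {1..p})
     \<union> (\<Union>i\<in>{1..3*p}. In i ` EH i) \<union> (\<Union>i\<in>{1..3*p}. Es i ` VH i) \<union> (\<Union>i\<in>{1..3*p}. Cs i ` VH i)"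
    unfolding codes_def by auto
  moreover have "finite ((\<lambda>(l,j). Sp l j) ` ({..<3::nat} \<times> {1..p}))" by simp
  moreover have "finite (\<Union>i\<in>{1..3*p}. In i ` EH i)" using finEH by auto
  moreover have "finite (\<Union>i\<in>{1..3*p}. Es i ` VH i)" using finVH by auto
  moreover have "finite (\<Union>i\<in>{1..3*p}. Cs i ` VH i)" using finVH by auto
  ultimately have "finite ((\<lambda>(l,j). Sp l j) ` ({..<3} \<times> {1..p})
     \<union> (\<Union>i\<in>{1..3*p}. In i ` EH i) \<union> (\<Union>i\<in>{1..3*p}. Es i ` VH i) \<union> (\<Union>i\<in>{1..3*p}. Cs i ` VH i))"
    by (intro finite_UnI)
  then show ?thesis using S by (rule finite_subset[rotated])
qed

end

context ctx
begin

lemma E_img1: "edge_of p ` {Sp l j :: 'a code | l j. l < 3 \<and> 1 \<le> j \<and> j \<le> p} = {{spv l j, spv l (Suc j)} | l j. l < 3 \<and> j < p}"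
proof (rule set_eqI, rule iffI)
  fix x :: "((nat \<times> nat) + (nat \<times> 'a)) set" assume "x \<in> edge_of p ` {Sp l j | l j. l < 3 \<and> 1 \<le> j \<and> j \<le> p}"
  then obtain k where k: "k \<in> {Sp l j | l j. l < 3 \<and> 1 \<le> j \<and> j \<le> p}" "x = edge_of p k" by blast
  then obtain l j where h0: "k = Sp l j" "l < 3" "1 \<le> j" "j \<le> p" by blast
  then have h: "x = {spv l j, spv l (j - 1)}" "l < 3" "1 \<le> j" "j \<le> p" using k by auto
  have sj: "Suc (j - 1) = j" using h(3) by simp
  have "x = {spv l (j - 1), spv l (Suc (j - 1))}" unfolding sj h(1) by (rule insert_commute)
  moreover have "j - 1 < p" using h by simp
  ultimately show "x \<in> {{spv l j :: (nat \<times> nat) + (nat \<times> 'a), spv l (Suc j)} | l j. l < 3 \<and> j < p}" using h(2) by blast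
next
  fix x :: "((nat \<times> nat) + (nat \<times> 'a)) set" assume "x \<in> {{spv l j, spv l (Suc j)} | l j. l < 3 \<and> j < p}"
  then obtain l j where h: "x = {spv l j, spv l (Suc j)}" "l < 3" "j < p" by blast
  have "x = edge_of p (Sp l (Suc j))" unfolding h(1) edge_of.simps diff_Suc_1 by (rule insert_commute)
  moreover have "Sp l (Suc j) \<in> {Sp l j | l j. l < 3 \<and> 1 \<le> j \<and> j \<le> p}" using h by auto
  ultimately show "x \<in> edge_of p ` {Sp l j | l j. l < 3 \<and> 1 \<le> j \<and> j \<le> p}" by (rule image_eqI)
qed

lemma E_img2: "edge_of p ` {In i e | i e. i \<in> {1..3*p} \<and> e \<in> EH i} = {{Inr (i, u), Inr (i, v)} | i u v. i \<in> {1..3*p} \<and> {u, v} \<in> EH i}"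
proof (rule set_eqI, rule iffI)
  fix x :: "((nat \<times> nat) + (nat \<times> 'a)) set" assume "x \<in> edge_of p ` {In i e | i e. i \<in> {1..3*p} \<and> e \<in> EH i}"
  then obtain k where k: "k \<in> {In i e | i e. i \<in> {1..3*p} \<and> e \<in> EH i}" "x = edge_of p k" by blast
  then obtain i e where h0: "k = In i e" "i \<in> {1..3*p}" "e \<in> EH i" by blast
  then have h: "x = (\<lambda>v. Inr (i, v)) ` e" "i \<in> {1..3*p}" "e \<in> EH i" using k by auto
  then obtain u v where "e = {u, v}" using edgeH by blast
  then have "x = {Inr (i, u), Inr (i, v)} \<and> i \<in> {1..3*p} \<and> {u, v} \<in> EH i" using h by auto
  then show "x \<in> {{Inr (i, u), Inr (i, v)} | i u v. i \<in> {1..3*p} \<and> {u, v} \<in> EH i}" by blast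
next
  fix x :: "((nat \<times> nat) + (nat \<times> 'a)) set" assume "x \<in> {{Inr (i, u), Inr (i, v)} | i u v. i \<in> {1..3*p} \<and> {u, v} \<in> EH i}"
  then obtain i u v where h: "x = {Inr (i, u), Inr (i, v)}" "i \<in> {1..3*p}" "{u, v} \<in> EH i" by blast
  then have "x = edge_of p (In i {u, v})" by auto
  moreover have "In i {u, v} \<in> {In i e | i e. i \<in> {1..3*p} \<and> e \<in> EH i}" using h by blast
  ultimately show "x \<in> edge_of p ` {In i e | i e. i \<in> {1..3*p} \<and> e \<in> EH i}" by (rule image_eqI)
qed

lemma E_img3: "edge_of p ` {Es i v | i v. i \<in> {1..3*p} \<and> v \<in> VH i} = {{Inr (i, v), spv (att_leg i) (att_pos p i)} | i v. i \<in> {1..3*p} \<and> v \<in> VH i}"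
  by force

lemma E_img4: "edge_of p ` {Cs i v | i v. i \<in> {1..3*p} \<and> v \<in> VH i} = {{Inr (i, v), spv (att_leg i) (att_pos p i - 1)} | i v. i \<in> {1..3*p} \<and> v \<in> VH i}"
  by force

lemma E_img: "E = edge_of p ` K"
  unfolding corona_E_def codes_def image_Un E_img1 E_img2 E_img3 E_img4 ..

end

context ctx
begin

lemma K_cases:
  assumes "k \<in> K"
  obtains (sp) l j where "k = Sp l j" "l < 3" "1 \<le> j" "j \<le> p"
  | (int) i e where "k = In i e" "i \<in> {1..3*p}" "e \<in> EH i"
  | (es) i v where "k = Es i v" "i \<in> {1..3*p}" "v \<in> VH i"
  | (cs) i v where "k = Cs i v" "i \<in> {1..3*p}" "v \<in> VH i"
  using assms unfolding codes_def by blast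

lemma edge_ne: "i \<in> {1..3*p} \<Longrightarrow> e \<in> EH i \<Longrightarrow> e \<noteq> {}"
  using edgeH by blast

lemma inj_edge: "inj_on (edge_of p) K"
proof (rule inj_onI)
  fix a b assume a: "a \<in> K" and b: "b \<in> K" and eq: "edge_of p a = edge_of p b"
  from a show "a = b"
  proof (cases rule: K_cases)
    case (sp l j)
    from b show ?thesis
    proof (cases rule: K_cases)
      case (sp l' j')
      then show ?thesis using eq \<open>a = Sp l j\<close> sp
        by (auto simp: spv_def doubleton_eq_iff split: if_splits)
    next
      case (int i e)
      then obtain x where "x \<in> e" using edge_ne by blast
      then show ?thesis using eq \<open>a = Sp l j\<close> int by (auto simp: spv_def split: if_splits)
    qed (use eq \<open>a = Sp l j\<close> in \<open>auto simp: spv_def doubleton_eq_iff split: if_splits\<close>)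
  next
    case (int i e)
    note ha = int
    from b show ?thesis
    proof (cases rule: K_cases)
      case (sp l' j')
      obtain x where "x \<in> e" using edge_ne ha by blast
      then show ?thesis using eq \<open>a = In i e\<close> sp by (auto simp: spv_def split: if_splits)
    next
      case (int i' e')
      obtain x where x: "x \<in> e" using edge_ne ha(2,3) by blast
      have "Inr (i, x) \<in> edge_of p b" using eq ha(1) x by (metis edge_of.simps(2) imageI)
      then have ii: "i' = i" using \<open>b = In i' e'\<close> by auto
      have "(\<lambda>v. Inr (i, v) :: (nat \<times> nat) + (nat \<times> 'a)) ` e = (\<lambda>v. Inr (i, v)) ` e'" using eq ha(1) \<open>b = In i' e'\<close> ii by simp
      moreover have "inj (\<lambda>v. Inr (i, v) :: (nat \<times> nat) + (nat \<times> 'a))" by (auto intro: injI)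
      ultimately have "e = e'" by (simp add: inj_image_eq_iff)
      then show ?thesis using ha(1) \<open>b = In i' e'\<close> ii by simp
    next
      case (es i' v')
      then show ?thesis using eq \<open>a = In i e\<close> by (auto simp: spv_def split: if_splits)
    next
      case (cs i' v')
      then show ?thesis using eq \<open>a = In i e\<close> by (auto simp: spv_def split: if_splits)
    qed
  next
    case (es i v)
    have ab: "1 \<le> att_pos p i" using att_pos_bounds es by auto
    from b show ?thesis
    proof (cases rule: K_cases)
      case (sp l' j')
      then show ?thesis using eq \<open>a = Es i v\<close> by (auto simp: spv_def doubleton_eq_iff split: if_splits)
    next
      case (int i' e')
      obtain x where "x \<in> e'" using edge_ne int by blast
      then show ?thesis using eq \<open>a = Es i v\<close> int by (auto simp: spv_def split: if_splits)
    next
      case (es i' v')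
      then show ?thesis using eq \<open>a = Es i v\<close> by (auto simp: doubleton_eq_iff)
    next
      case (cs i' v')
      then show ?thesis using eq \<open>a = Es i v\<close> ab by (auto simp: spv_def doubleton_eq_iff split: if_splits)
    qed
  next
    case (cs i v)
    have ab: "1 \<le> att_pos p i" using att_pos_bounds cs by auto
    from b show ?thesis
    proof (cases rule: K_cases)
      case (sp l' j')
      then show ?thesis using eq \<open>a = Cs i v\<close> by (auto simp: spv_def doubleton_eq_iff split: if_splits)
    next
      case (int i' e')
      obtain x where "x \<in> e'" using edge_ne int by blast
      then show ?thesis using eq \<open>a = Cs i v\<close> int by (auto simp: spv_def split: if_splits)
    next
      case (es i' v')
      have "1 \<le> att_pos p i'" using att_pos_bounds es by auto
      then show ?thesis using eq \<open>a = Cs i v\<close> es by (auto simp: spv_def doubleton_eq_iff split: if_splits)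
    next
      case (cs i' v')
      then show ?thesis using eq \<open>a = Cs i v\<close> by (auto simp: doubleton_eq_iff)
    qed
  qed
qed

end

context ctx
begin

definition I where "I v = {k \<in> K. v \<in> edge_of p k}"

lemma spv_eq_Inl: "spv l' j' = Inl (l, j) \<longleftrightarrow> (1 \<le> j' \<and> l' = l \<and> j' = j) \<or> (j' = 0 \<and> l = 0 \<and> j = 0)"
  by (auto simp: spv_def)

lemma mem_spv:
  assumes k: "k \<in> K" and l: "l < 3" and j: "1 \<le> j" "j \<le> p"
  shows "spv l j \<in> edge_of p k \<longleftrightarrow>
    (k = Sp l j \<or> (j < p \<and> k = Sp l (Suc j)) \<or> (\<exists>v. k = Es (3*(p-j)+l+1) v)
     \<or> (\<exists>v. j < p \<and> k = Cs (3*(p-(j+1))+l+1) v))"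
proof -
  have sj: "spv l j = Inl (l, j)" using j by (simp add: spv_pos)
  from k show ?thesis
  proof (cases rule: K_cases)
    case (sp l' j')
    have "spv l j \<in> edge_of p k \<longleftrightarrow> (l' = l \<and> j' = j) \<or> (l' = l \<and> j' = Suc j)"
      unfolding sj sp(1) edge_of.simps using sp j by (auto simp: spv_def)
    then show ?thesis using sp by auto
  next
    case (int i e)
    then show ?thesis by auto
  next
    case (es i v)
    have "spv l j \<in> edge_of p k \<longleftrightarrow> spv (att_leg i) (att_pos p i) = (Inl (l, j) :: (nat \<times> nat) + (nat \<times> 'a))"
      unfolding sj es(1) edge_of.simps by auto
    also have "\<dots> \<longleftrightarrow> att_leg i = l \<and> att_pos p i = j"
      using att_pos_bounds[OF es(2)] j by (auto simp: spv_eq_Inl)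
    also have "\<dots> \<longleftrightarrow> i = 3*(p-j)+l+1" using att_eq[OF es(2) l j] .
    finally show ?thesis using es by auto
  next
    case (cs i v)
    have "spv l j \<in> edge_of p k \<longleftrightarrow> spv (att_leg i) (att_pos p i - 1) = (Inl (l, j) :: (nat \<times> nat) + (nat \<times> 'a))"
      unfolding sj cs(1) edge_of.simps by auto
    also have "\<dots> \<longleftrightarrow> att_leg i = l \<and> att_pos p i - 1 = j"
      using j by (auto simp: spv_eq_Inl)
    also have "\<dots> \<longleftrightarrow> (j < p \<and> i = 3*(p-(j+1))+l+1)" using att_cs[OF cs(2) l j] .
    finally show ?thesis using cs by auto
  qed
qed

lemma mem_v0:
  assumes k: "k \<in> K"
  shows "spv 0 0 \<in> edge_of p k \<longleftrightarrow>
    ((\<exists>l. l < 3 \<and> k = Sp l 1) \<or> (\<exists>i v. 3*p-2 \<le> i \<and> k = Cs i v))"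
proof -
  from k show ?thesis
  proof (cases rule: K_cases)
    case (sp l' j')
    have "spv 0 0 \<in> edge_of p k \<longleftrightarrow> j' = 1"
      unfolding sp(1) edge_of.simps using sp by (auto simp: spv_def)
    then show ?thesis using sp by auto
  next
    case (int i e)
    then show ?thesis by auto
  next
    case (es i v)
    have "spv 0 0 \<notin> edge_of p k"
      unfolding es(1) edge_of.simps using att_pos_bounds[OF es(2)] by (auto simp: spv_def)
    then show ?thesis using es by auto
  next
    case (cs i v)
    have "spv 0 0 \<in> edge_of p k \<longleftrightarrow> att_pos p i = 1"
      unfolding cs(1) edge_of.simps using att_pos_bounds[OF cs(2)] by (auto simp: spv_def)
    also have "\<dots> \<longleftrightarrow> 3*p-2 \<le> i" using att_v0[OF cs(2)] .
    finally show ?thesis using cs by auto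
  qed
qed

lemma I_H:
  assumes i: "i \<in> {1..3*p}" and u: "u \<in> VH i"
  shows "I (Inr (i, u)) = In i ` {e \<in> EH i. u \<in> e} \<union> {Es i u, Cs i u}"
proof (rule set_eqI)
  fix k
  show "k \<in> I (Inr (i, u)) \<longleftrightarrow> k \<in> In i ` {e \<in> EH i. u \<in> e} \<union> {Es i u, Cs i u}"
  proof
    assume "k \<in> I (Inr (i, u))"
    then have k: "k \<in> K" "Inr (i, u) \<in> edge_of p k" unfolding I_def by auto
    from k(1) show "k \<in> In i ` {e \<in> EH i. u \<in> e} \<union> {Es i u, Cs i u}"
      by (cases rule: K_cases) (use k(2) in auto)
  next
    assume "k \<in> In i ` {e \<in> EH i. u \<in> e} \<union> {Es i u, Cs i u}"
    then show "k \<in> I (Inr (i, u))" unfolding I_def codes_def using i u by auto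
  qed
qed

lemma I_S:
  assumes l: "l < 3" and j: "1 \<le> j" "j \<le> p"
  shows "I (spv l j) = {Sp l j} \<union> (if j < p then {Sp l (Suc j)} else {})
     \<union> Es (3*(p-j)+l+1) ` VH (3*(p-j)+l+1)
     \<union> (if j < p then Cs (3*(p-(j+1))+l+1) ` VH (3*(p-(j+1))+l+1) else {})"
proof (rule set_eqI)
  fix k
  have b: "3*(p-j)+l+1 \<in> {1..3*p}" using l j by auto
  have a: "j < p \<Longrightarrow> 3*(p-(j+1))+l+1 \<in> {1..3*p}" using l j by auto
  show "k \<in> I (spv l j) \<longleftrightarrow> k \<in> {Sp l j} \<union> (if j < p then {Sp l (Suc j)} else {})
     \<union> Es (3*(p-j)+l+1) ` VH (3*(p-j)+l+1)
     \<union> (if j < p then Cs (3*(p-(j+1))+l+1) ` VH (3*(p-(j+1))+l+1) else {})"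
  proof
    assume "k \<in> I (spv l j)"
    then have k: "k \<in> K" "spv l j \<in> edge_of p k" unfolding I_def by auto
    then have "k = Sp l j \<or> (j < p \<and> k = Sp l (Suc j)) \<or> (\<exists>v. k = Es (3*(p-j)+l+1) v)
     \<or> (\<exists>v. j < p \<and> k = Cs (3*(p-(j+1))+l+1) v)" using mem_spv[OF k(1) l j] by blast
    then show "k \<in> {Sp l j} \<union> (if j < p then {Sp l (Suc j)} else {})
     \<union> Es (3*(p-j)+l+1) ` VH (3*(p-j)+l+1)
     \<union> (if j < p then Cs (3*(p-(j+1))+l+1) ` VH (3*(p-(j+1))+l+1) else {})"
      using k(1) unfolding codes_def by auto
  next
    assume h: "k \<in> {Sp l j} \<union> (if j < p then {Sp l (Suc j)} else {})
     \<union> Es (3*(p-j)+l+1) ` VH (3*(p-j)+l+1)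
     \<union> (if j < p then Cs (3*(p-(j+1))+l+1) ` VH (3*(p-(j+1))+l+1) else {})"
    then have kK: "k \<in> K" unfolding codes_def using l j a b by (auto split: if_splits)
    have "k = Sp l j \<or> (j < p \<and> k = Sp l (Suc j)) \<or> (\<exists>v. k = Es (3*(p-j)+l+1) v)
     \<or> (\<exists>v. j < p \<and> k = Cs (3*(p-(j+1))+l+1) v)" using h by (auto split: if_splits)
    then have "spv l j \<in> edge_of p k" using mem_spv[OF kK l j] by blast
    then show "k \<in> I (spv l j)" unfolding I_def using kK by auto
  qed
qed

lemma I_0:
  "I (spv 0 0) = (\<lambda>l. Sp l 1) ` {..<3} \<union> (\<Union>i\<in>{3*p-2..3*p}. Cs i ` VH i)"
proof (rule set_eqI)
  fix k
  show "k \<in> I (spv 0 0) \<longleftrightarrow> k \<in> (\<lambda>l. Sp l 1) ` {..<3} \<union> (\<Union>i\<in>{3*p-2..3*p}. Cs i ` VH i)"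
  proof
    assume "k \<in> I (spv 0 0)"
    then have k: "k \<in> K" "spv 0 0 \<in> edge_of p k" unfolding I_def by auto
    then have "(\<exists>l. l < 3 \<and> k = Sp l 1) \<or> (\<exists>i v. 3*p-2 \<le> i \<and> k = Cs i v)" using mem_v0 by blast
    then show "k \<in> (\<lambda>l. Sp l 1) ` {..<3} \<union> (\<Union>i\<in>{3*p-2..3*p}. Cs i ` VH i)"
      using k(1) unfolding codes_def by auto
  next
    assume h: "k \<in> (\<lambda>l. Sp l 1) ` {..<3} \<union> (\<Union>i\<in>{3*p-2..3*p}. Cs i ` VH i)"
    then have kK: "k \<in> K" unfolding codes_def using p by auto
    have "(\<exists>l. l < 3 \<and> k = Sp l 1) \<or> (\<exists>i v. 3*p-2 \<le> i \<and> k = Cs i v)" using h by auto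
    then have "spv 0 0 \<in> edge_of p k" using mem_v0[OF kK] by blast
    then show "k \<in> I (spv 0 0)" unfolding I_def using kK by auto
  qed
qed

end

fun tier :: "nat \<Rightarrow> 'a code \<Rightarrow> nat" where
  "tier p (In i e) = (if i \<le> 3 then 4*(i-1) else if i \<le> 3*p-3 then 12+2*i else 13+12*p)"
| "tier p (Cs i v) = (if i \<le> 3 then 4*(i-1)+1 else if i \<le> 3*p-3 then 13+2*i else 14+12*p)"
| "tier p (Es i v) = (if i \<le> 3 then 4*(i-1)+2 else if i \<le> 3*p-3 then 12+6*p+i else 13+12*p)"
| "tier p (Sp l j) = (if 3*(p-j)+l \<le> 2 then 4*(3*(p-j)+l)+3
     else if 3*(p-j)+l \<le> 3*p-4 then 13+9*p+(3*(p-j)+l) else 14+12*p)"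

fun srt :: "nat \<Rightarrow> 'a code \<Rightarrow> bool" where
  "srt p (In i e) = False"
| "srt p (Cs i v) = (3*p-2 \<le> i)"
| "srt p (Es i v) = (i \<le> 3*p-3)"
| "srt p (Sp l j) = (j = 1)"

fun own :: "'a code \<Rightarrow> (nat \<times> nat) + (nat \<times> 'a)" where
  "own (Sp l j) = spv l j"
| "own (In i e) = Inl (0, 0)"
| "own (Es i v) = Inr (i, v)"
| "own (Cs i v) = Inr (i, v)"

context ctx
begin

definition idx :: "'a code \<Rightarrow> nat" where "idx = (SOME h. inj_on h K)"

lemma inj_idx: "inj_on idx K"
proof -
  have "\<exists>h::'a code \<Rightarrow> nat. inj_on h K" using finite_imp_inj_to_nat_seg[OF finK] by blast
  then show ?thesis unfolding idx_def by (rule someI_ex)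
qed

definition tier2 :: "'a code \<Rightarrow> nat" where
  "tier2 k = 2 * tier p k + (if srt p k then 1 else 0)"

definition key1 :: "'a code \<Rightarrow> nat \<times> nat \<times> nat" where
  "key1 k = (tier2 k, 0, idx k)"

definition lab1 :: "'a code \<Rightarrow> nat" where
  "lab1 k = card {k'\<in>K. key1 k' < key1 k} + 1"

definition P1 :: "(nat \<times> nat) + (nat \<times> 'a) \<Rightarrow> nat" where
  "P1 v = sum lab1 {k \<in> I v. \<not> srt p k}"

definition key :: "'a code \<Rightarrow> nat \<times> nat \<times> nat" where
  "key k = (tier2 k, if srt p k then P1 (own k) else 0, idx k)"

definition lab :: "'a code \<Rightarrow> nat" where
  "lab k = card {k'\<in>K. key k' < key k} + 1"

definition s :: "(nat \<times> nat) + (nat \<times> 'a) \<Rightarrow> nat" where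
  "s v = sum lab (I v)"

lemma inj_key: "inj_on key K"
  using inj_idx unfolding key_def inj_on_def by auto

lemma lab_bij: "bij_betw lab K {1..card K}"
  unfolding lab_def using rank_props(1)[OF finK inj_key] .

lemma lab_inj: "inj_on lab K"
  using lab_bij bij_betw_def by blast

lemma lab_pos: "0 < lab k"
  unfolding lab_def by simp

lemma lab_key: "k \<in> K \<Longrightarrow> k' \<in> K \<Longrightarrow> key k < key k' \<Longrightarrow> lab k < lab k'"
  unfolding lab_def using rank_props(2)[OF finK inj_key] by blast

lemma lab_mono: "k \<in> K \<Longrightarrow> k' \<in> K \<Longrightarrow> tier p k < tier p k' \<Longrightarrow> lab k < lab k'"
  by (rule lab_key) (auto simp: key_def tier2_def)

lemma lab_sort: "k \<in> K \<Longrightarrow> k' \<in> K \<Longrightarrow> srt p k \<Longrightarrow> srt p k' \<Longrightarrow> tier p k = tier p k'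
   \<Longrightarrow> P1 (own k) < P1 (own k') \<Longrightarrow> lab k < lab k'"
  by (rule lab_key) (auto simp: key_def tier2_def)

lemma lab_unsorted:
  assumes k: "k \<in> K" and ns: "\<not> srt p k"
  shows "lab k = lab1 k"
proof -
  have "{k'\<in>K. key k' < key k} = {k'\<in>K. key1 k' < key1 k}"
  proof (rule Collect_cong)
    fix k'
    show "(k' \<in> K \<and> key k' < key k) = (k' \<in> K \<and> key1 k' < key1 k)"
    proof (cases "tier2 k' = tier2 k")
      case True
      then have "srt p k' = srt p k" unfolding tier2_def by (cases "srt p k'"; cases "srt p k"; simp; presburger)
      then show ?thesis using ns True by (simp add: key_def key1_def)
    next
      case False
      then show ?thesis using ns by (auto simp: key_def key1_def)
    qed
  qed
  then show ?thesis unfolding lab_def lab1_def by simp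
qed

end

context ctx
begin

lemma inc_img: "{e \<in> E. v \<in> e} = edge_of p ` I v"
  unfolding E_img I_def by blast

lemma finI: "finite (I v)"
  unfolding I_def using finK by simp

lemma IK: "I v \<subseteq> K"
  unfolding I_def by blast


lemma deg_I: "degree E v = card (I v)"
proof -
  have "inj_on (edge_of p) (I v)" using inj_edge IK inj_on_subset by blast
  then show ?thesis unfolding degree_def inc_img by (simp add: card_image)
qed

definition f :: "((nat \<times> nat) + (nat \<times> 'a)) set \<Rightarrow> nat" where
  "f e = lab (inv_into K (edge_of p) e)"

lemma f_edge: "k \<in> K \<Longrightarrow> f (edge_of p k) = lab k"
  unfolding f_def using inj_edge by (simp add: inv_into_f_f)
lemma vsum_s: "vertex_sum E f v = s v"
proof -
  have inj: "inj_on (edge_of p) (I v)" using inj_edge IK inj_on_subset by blast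
  have "vertex_sum E f v = sum f (edge_of p ` I v)" unfolding vertex_sum_def inc_img ..
  also have "\<dots> = sum (f \<circ> edge_of p) (I v)" using inj by (rule sum.reindex)
  also have "\<dots> = sum lab (I v)"
  proof (rule sum.cong)
    fix x assume "x \<in> I v"
    then have "x \<in> K" using IK by blast
    then show "(f \<circ> edge_of p) x = lab x" by (simp add: f_edge)
  qed simp
  finally show ?thesis unfolding s_def .
qed

lemma f_bij: "bij_betw f E {1..card E}"
proof -
  have b1: "bij_betw (edge_of p) K E" unfolding bij_betw_def by (rule conjI[OF inj_edge E_img[symmetric]])
  then have b2: "bij_betw (inv_into K (edge_of p)) E K" by (rule bij_betw_inv_into)
  have b3: "bij_betw (lab \<circ> inv_into K (edge_of p)) E {1..card K}"
    using b2 lab_bij by (rule bij_betw_trans)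
  have fe: "f = lab \<circ> inv_into K (edge_of p)" by (rule ext) (simp only: f_def comp_def)
  have "card K = card E" using b1 by (rule bij_betw_same_card)
  then show ?thesis using b3 fe by simp
qed

lemma antimagic_of_s: "inj_on s (corona_V p VH) \<Longrightarrow> antimagic (corona_V p VH) E"
proof -
  assume a: "inj_on s (corona_V p VH)"
  have "vertex_sum E f = s" by (rule ext) (rule vsum_s)
  then have "inj_on (vertex_sum E f) (corona_V p VH)" using a by simp
  then show ?thesis unfolding antimagic_def using f_bij by blast
qed

end

context ctx
begin

lemma p3: "p \<ge> 3" using p by simp

lemma mono_m: "1 \<le> i \<Longrightarrow> i \<le> j \<Longrightarrow> j \<le> 3*p \<Longrightarrow> card (VH i) \<le> card (VH j)"
proof (induction j)
  case 0
  then show ?case by simp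
next
  case (Suc j)
  show ?case
  proof (cases "i = Suc j")
    case True
    then show ?thesis by simp
  next
    case False
    then have "i \<le> j" using Suc by simp
    then have "card (VH i) \<le> card (VH j)" using Suc by simp
    also have "\<dots> \<le> card (VH (Suc j))" using sorted[of j] Suc \<open>i \<le> j\<close> by simp
    finally show ?thesis .
  qed
qed

lemma degH_le: assumes "i \<in> {1..3*p}" "u \<in> VH i" shows "degree (EH i) u + 1 \<le> card (VH i)"
proof -
  have "{e \<in> EH i. u \<in> e} \<subseteq> (\<lambda>v. {u, v}) ` (VH i - {u})"
  proof
    fix e assume e: "e \<in> {e \<in> EH i. u \<in> e}"
    then obtain a b where ab: "a \<noteq> b" "a \<in> VH i" "b \<in> VH i" "e = {a, b}" using edgeH[OF assms(1)] by blast
    show "e \<in> (\<lambda>v. {u, v}) ` (VH i - {u})"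
    proof (cases "u = a")
      case True
      then show ?thesis using ab by auto
    next
      case False
      then have "u = b" using e ab by auto
      then show ?thesis using ab by (auto simp: insert_commute)
    qed
  qed
  then have "degree (EH i) u \<le> card ((\<lambda>v. {u, v}) ` (VH i - {u}))"
    unfolding degree_def using finVH[OF assms(1)] by (simp add: card_mono)
  also have "\<dots> \<le> card (VH i - {u})" by (rule card_image_le) (use finVH[OF assms(1)] in simp)
  also have "\<dots> = card (VH i) - 1" using assms finVH[OF assms(1)] by simp
  finally show ?thesis using two[OF assms(1)] by simp
qed

lemma c1': assumes "i \<in> {1..<3*p}" "u \<in> VH i" "w \<in> VH (Suc i)"
  shows "degree (EH i) u \<le> degree (EH (Suc i)) w"
proof -
  have i1: "i \<in> {1..3*p}" "Suc i \<in> {1..3*p}" using assms by auto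
  have "degree (EH i) u \<le> max_degree (VH i) (EH i)"
    unfolding max_degree_def using finVH[OF i1(1)] assms(2) by simp
  also have "\<dots> \<le> min_degree (VH (Suc i)) (EH (Suc i))" using c1[OF assms(1)] .
  also have "\<dots> \<le> degree (EH (Suc i)) w"
    unfolding min_degree_def using finVH[OF i1(2)] assms(3) by simp
  finally show ?thesis .
qed

lemma deg_mono: "1 \<le> i \<Longrightarrow> i < j \<Longrightarrow> j \<le> 3*p \<Longrightarrow> u \<in> VH i \<Longrightarrow> w \<in> VH j
  \<Longrightarrow> degree (EH i) u \<le> degree (EH j) w"
proof (induction j arbitrary: w)
  case 0
  then show ?case by simp
next
  case (Suc j)
  show ?case
  proof (cases "i = j")
    case True
    then show ?thesis using c1'[of i u w] Suc by auto
  next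
    case False
    then have ij: "i < j" using Suc by simp
    have "j \<in> {1..3*p}" using Suc ij by auto
    then obtain w' where w': "w' \<in> VH j" using VH_ne by blast
    have "degree (EH i) u \<le> degree (EH j) w'" using Suc.IH[OF Suc.prems(1) ij _ Suc.prems(4) w'] Suc.prems by simp
    also have "\<dots> \<le> degree (EH (Suc j)) w" using c1'[of j w' w] Suc.prems w' ij by auto
    finally show ?thesis .
  qed
qed

end

context ctx
begin

lemma domT:
  assumes "A \<subseteq> K" "B \<subseteq> K" "card A \<le> card B" "B \<noteq> {}"
    and "\<And>a b. a \<in> A \<Longrightarrow> b \<in> B \<Longrightarrow> tier p a < tier p b"
  shows "sum lab A < sum lab B"
proof (rule dom_sum)
  show "finite A" "finite B" using finite_subset[OF assms(1) finK] finite_subset[OF assms(2) finK] by auto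
  show "\<And>a b. a \<in> A \<Longrightarrow> b \<in> B \<Longrightarrow> lab a < lab b" using assms lab_mono by blast
qed (use assms lab_pos in auto)

lemma domT_le:
  assumes "A \<subseteq> K" "B \<subseteq> K" "card A \<le> card B"
    and "\<And>a b. a \<in> A \<Longrightarrow> b \<in> B \<Longrightarrow> tier p a < tier p b"
  shows "sum lab A \<le> sum lab B"
proof (rule dom_sum_le)
  show "finite A" "finite B" using finite_subset[OF assms(1) finK] finite_subset[OF assms(2) finK] by auto
  show "\<And>a b. a \<in> A \<Longrightarrow> b \<in> B \<Longrightarrow> lab a < lab b" using assms lab_mono by blast
qed (use assms in auto)

lemma sum_sub: "B \<subseteq> I v \<Longrightarrow> sum lab B \<le> s v"
  unfolding s_def using finI by (rule sum_mono2) auto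

definition inH :: "nat \<Rightarrow> 'a \<Rightarrow> 'a code set" where
  "inH i u = In i ` {e \<in> EH i. u \<in> e}"

lemma inH_facts:
  assumes i: "i \<in> {1..3*p}" and u: "u \<in> VH i"
  shows "card (inH i u) = degree (EH i) u" "inH i u \<subseteq> K" "Es i u \<in> K" "Cs i u \<in> K"
    "finite (inH i u)" "Es i u \<notin> inH i u" "Cs i u \<notin> inH i u"
    "I (Inr (i, u)) = inH i u \<union> {Es i u, Cs i u}"
    "\<And>k. k \<in> inH i u \<Longrightarrow> tier p k = tier p (In i {})"
proof -
  have "inj_on (In i) {e \<in> EH i. u \<in> e}" by (auto intro: inj_onI)
  then show "card (inH i u) = degree (EH i) u" unfolding inH_def degree_def by (simp add: card_image)
  show "inH i u \<subseteq> K" unfolding inH_def codes_def using i by auto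
  show "Es i u \<in> K" "Cs i u \<in> K" unfolding codes_def using i u by auto
  show "finite (inH i u)" unfolding inH_def using finEH[OF i] by simp
  show "Es i u \<notin> inH i u" "Cs i u \<notin> inH i u" unfolding inH_def by auto
  show "I (Inr (i, u)) = inH i u \<union> {Es i u, Cs i u}" unfolding inH_def using I_H[OF i u] .
  show "\<And>k. k \<in> inH i u \<Longrightarrow> tier p k = tier p (In i {})" unfolding inH_def by auto
qed

lemma s_H:
  assumes i: "i \<in> {1..3*p}" and u: "u \<in> VH i"
  shows "s (Inr (i, u)) = sum lab (inH i u) + lab (Es i u) + lab (Cs i u)"
    "card (I (Inr (i, u))) = degree (EH i) u + 2"
proof -
  note F = inH_facts[OF i u]
  have "s (Inr (i, u)) = sum lab (inH i u \<union> {Es i u, Cs i u})" unfolding s_def F(8) ..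
  also have "\<dots> = sum lab (inH i u) + sum lab {Es i u, Cs i u}"
    by (rule sum.union_disjoint) (use F in auto)
  finally show "s (Inr (i, u)) = sum lab (inH i u) + lab (Es i u) + lab (Cs i u)" by simp
  have "card (I (Inr (i, u))) = card (inH i u) + card {Es i u, Cs i u}"
    unfolding F(8) by (rule card_Un_disjoint) (use F in auto)
  then show "card (I (Inr (i, u))) = degree (EH i) u + 2" using F(1) by simp
qed

lemma degE_H: "i \<in> {1..3*p} \<Longrightarrow> u \<in> VH i \<Longrightarrow> degree E (Inr (i, u)) = degree (EH i) u + 2"
  using s_H(2) deg_I by simp

lemma img_facts:
  assumes i: "i \<in> {1..3*p}"
  shows "card (Es i ` VH i) = card (VH i)" "card (Cs i ` VH i) = card (VH i)"
    "Es i ` VH i \<subseteq> K" "Cs i ` VH i \<subseteq> K" "finite (Es i ` VH i)" "finite (Cs i ` VH i)"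
    "Es i ` VH i \<noteq> {}" "Cs i ` VH i \<noteq> {}"
proof -
  show "card (Es i ` VH i) = card (VH i)" "card (Cs i ` VH i) = card (VH i)"
    by (auto intro!: card_image inj_onI)
  show "Es i ` VH i \<subseteq> K" "Cs i ` VH i \<subseteq> K" unfolding codes_def using i by auto
  show "finite (Es i ` VH i)" "finite (Cs i ` VH i)" using finVH[OF i] by auto
  show "Es i ` VH i \<noteq> {}" "Cs i ` VH i \<noteq> {}" using VH_ne[OF i] by auto
qed

lemma sp_inner:
  assumes l: "l < 3" and j: "1 \<le> j" "j < p"
  defines "b \<equiv> 3*(p-j)+l+1" and "a \<equiv> 3*(p-(j+1))+l+1"
  shows "I (spv l j) = {Sp l j, Sp l (Suc j)} \<union> Es b ` VH b \<union> Cs a ` VH a"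
    "s (spv l j) = lab (Sp l j) + lab (Sp l (Suc j)) + sum lab (Es b ` VH b) + sum lab (Cs a ` VH a)"
    "card (I (spv l j)) = 2 + card (VH b) + card (VH a)"
    "b \<in> {1..3*p}" "a \<in> {1..3*p}" "b = a + 3"
proof -
  show Ieq: "I (spv l j) = {Sp l j, Sp l (Suc j)} \<union> Es b ` VH b \<union> Cs a ` VH a"
    unfolding I_S[OF l j(1) less_imp_le[OF j(2)]] b_def a_def using j by auto
  show bi: "b \<in> {1..3*p}" "a \<in> {1..3*p}" "b = a + 3" unfolding b_def a_def using l j by auto
  note fb = img_facts[OF bi(1)] and fa = img_facts[OF bi(2)]
  have d1: "{Sp l j, Sp l (Suc j)} \<inter> Es b ` VH b = {}" by auto
  have d2: "({Sp l j, Sp l (Suc j)} \<union> Es b ` VH b) \<inter> Cs a ` VH a = {}" by auto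
  have "s (spv l j) = sum lab ({Sp l j, Sp l (Suc j)} \<union> Es b ` VH b) + sum lab (Cs a ` VH a)"
    unfolding s_def Ieq by (rule sum.union_disjoint) (use fa fb d2 in auto)
  also have "sum lab ({Sp l j, Sp l (Suc j)} \<union> Es b ` VH b) = sum lab {Sp l j, Sp l (Suc j)} + sum lab (Es b ` VH b)"
    by (rule sum.union_disjoint) (use fb d1 in auto)
  finally show "s (spv l j) = lab (Sp l j) + lab (Sp l (Suc j)) + sum lab (Es b ` VH b) + sum lab (Cs a ` VH a)"
    by simp
  have "card (I (spv l j)) = card ({Sp l j, Sp l (Suc j)} \<union> Es b ` VH b) + card (Cs a ` VH a)"
    unfolding Ieq by (rule card_Un_disjoint) (use fa fb d2 in auto)
  also have "card ({Sp l j, Sp l (Suc j)} \<union> Es b ` VH b) = card {Sp l j :: 'a code, Sp l (Suc j)} + card (Es b ` VH b)"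
    by (rule card_Un_disjoint) (use fb d1 in auto)
  finally show "card (I (spv l j)) = 2 + card (VH b) + card (VH a)" using fa fb by simp
qed

lemma sp_end:
  assumes l: "l < 3"
  shows "I (spv l p) = {Sp l p} \<union> Es (l+1) ` VH (l+1)"
proof -
  have "1 \<le> p" using p by simp
  then show ?thesis unfolding I_S[OF l \<open>1 \<le> p\<close> order_refl] by simp
qed

end

context ctx
begin

lemma S1:
  assumes i: "i \<in> {1,2,3}" and u: "u \<in> VH i"
  shows "s (Inr (i, u)) < s (spv (i-1) p)"
proof -
  have i': "i \<in> {1..3*p}" using i p by auto
  note F = inH_facts[OF i' u]
  define A where "A = inH i u \<union> {Cs i u}"
  define B where "B = insert (Sp (i-1) p) (Es i ` (VH i - {u}))"
  have sA: "s (Inr (i, u)) = sum lab A + lab (Es i u)"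
  proof -
    have "sum lab A = sum lab (inH i u) + lab (Cs i u)" unfolding A_def using F by simp
    then show ?thesis using s_H(1)[OF i' u] by simp
  qed
  have l3: "i - 1 < 3" using i by auto
  have Isp: "I (spv (i-1) p) = {Sp (i-1) p} \<union> Es i ` VH i" 
  proof -
    have "i - 1 + 1 = i" using i by auto
    then show ?thesis using sp_end[OF l3] by simp
  qed
  have BK: "B \<subseteq> K" unfolding B_def using img_facts[OF i'] Isp IK by blast
  have finB: "finite B" using finite_subset[OF BK finK] .
  have EsnB: "Es i u \<notin> B" unfolding B_def by auto
  have "insert (Es i u) B \<subseteq> I (spv (i-1) p)" unfolding Isp B_def using u by auto
  then have "sum lab (insert (Es i u) B) \<le> s (spv (i-1) p)" by (rule sum_sub)
  then have sB: "sum lab B + lab (Es i u) \<le> s (spv (i-1) p)" using finB EsnB by simp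
  have cA: "card A = degree (EH i) u + 1" unfolding A_def using F by simp
  have "card (Es i ` (VH i - {u})) = card (VH i - {u})" by (auto intro!: card_image inj_onI)
  also have "\<dots> = card (VH i) - 1" using u finVH[OF i'] by simp
  finally have c1: "card (Es i ` (VH i - {u})) = card (VH i) - 1" .
  have "card B = Suc (card (Es i ` (VH i - {u})))" unfolding B_def using finVH[OF i']
    by (subst card_insert_disjoint) auto
  then have "card B = card (VH i)" using c1 two[OF i'] by simp
  then have cAB: "card A \<le> card B" using cA degH_le[OF i' u] by simp
  have AK: "A \<subseteq> K" unfolding A_def using F by auto
  have "sum lab A < sum lab B"
  proof (rule domT[OF AK BK cAB])
    show "B \<noteq> {}" unfolding B_def by simp
    fix a b assume a: "a \<in> A" and b: "b \<in> B"
    have ta: "tier p a \<le> 4*(i-1)+1" using a F(9) i unfolding A_def by auto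
    have tb: "tier p b \<ge> 4*(i-1)+2" using b i unfolding B_def by auto
    show "tier p a < tier p b" using ta tb by simp
  qed
  then show ?thesis using sA sB by simp
qed

lemma S2:
  assumes i: "i \<in> {1,2,3}" and w: "w \<in> VH (i+1)"
    and c2: "degree E (spv (i-1) p) \<le> min_degree' p VH EH (i+1)"
  shows "s (spv (i-1) p) < s (Inr (i+1, w))"
proof -
  have i': "i \<in> {1..3*p}" "i+1 \<in> {1..3*p}" using i p by auto
  note F = inH_facts[OF i'(2) w]
  have l3: "i - 1 < 3" using i by auto
  have Isp: "I (spv (i-1) p) = {Sp (i-1) p} \<union> Es i ` VH i" 
  proof -
    have "i - 1 + 1 = i" using i by auto
    then show ?thesis using sp_end[OF l3] by simp
  qed
  have "card (I (spv (i-1) p)) \<le> min_degree' p VH EH (i+1)" using c2 deg_I by simp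
  also have "\<dots> \<le> degree E (Inr (i+1, w))"
    unfolding min_degree'_def using finVH[OF i'(2)] w by simp
  also have "\<dots> = card (I (Inr (i+1, w)))" using deg_I by simp
  finally have cAB: "card (I (spv (i-1) p)) \<le> card (I (Inr (i+1, w)))" .
  have "sum lab (I (spv (i-1) p)) < sum lab (I (Inr (i+1, w)))"
  proof (rule domT[OF IK IK cAB])
    show "I (Inr (i+1, w)) \<noteq> {}" using F(8) by auto
    fix a b assume a: "a \<in> I (spv (i-1) p)" and b: "b \<in> I (Inr (i+1, w))"
    have ta: "tier p a \<le> 4*(i-1)+3" using a i unfolding Isp by auto
    have tb: "tier p b \<ge> 4*i" using b i p F(9) unfolding F(8) by auto
    show "tier p a < tier p b" using ta tb i by auto
  qed
  then show ?thesis unfolding s_def .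
qed

lemma S3:
  assumes i: "4 \<le> i" "i + 1 \<le> 3*p-3" and u: "u \<in> VH i" and w: "w \<in> VH (i+1)"
  shows "s (Inr (i, u)) < s (Inr (i+1, w))"
proof -
  have i': "i \<in> {1..3*p}" "i+1 \<in> {1..3*p}" using i by auto
  note Fu = inH_facts[OF i'(1) u] and Fw = inH_facts[OF i'(2) w]
  have "sum lab (inH i u) \<le> sum lab (inH (i+1) w)"
  proof (rule domT_le[OF Fu(2) Fw(2)])
    show "card (inH i u) \<le> card (inH (i+1) w)" unfolding Fu(1) Fw(1)
      using c1'[of i u w] i u w by auto
    fix a b assume "a \<in> inH i u" "b \<in> inH (i+1) w"
    then show "tier p a < tier p b" using Fu(9) Fw(9) i by auto
  qed
  moreover have "lab (Es i u) < lab (Es (i+1) w)" using Fu(3) Fw(3) i by (intro lab_mono) auto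
  moreover have "lab (Cs i u) < lab (Cs (i+1) w)" using Fu(4) Fw(4) i by (intro lab_mono) auto
  ultimately show ?thesis using s_H(1)[OF i'(1) u] s_H(1)[OF i'(2) w] by simp
qed

end

context ctx
begin

lemma cmp_shared:
  assumes "I x = insert t A" "t \<notin> A" "insert t B \<subseteq> I y" "t \<notin> B" "sum lab A < sum lab B"
  shows "s x < s y"
proof -
  have fA: "finite A" using finI[of x] assms(1) by simp
  have "B \<subseteq> I y" using assms(3) by blast
  then have fB: "finite B" using finI by (rule finite_subset)
  have "s x = sum lab A + lab t" unfolding s_def assms(1) using fA assms(2) by simp
  moreover have "sum lab B + lab t \<le> s y" using sum_sub[OF assms(3)] fB assms(4) by simp
  ultimately show ?thesis using assms(5) by simp
qed

lemma m4b: "4 \<le> b \<Longrightarrow> b \<le> 3*p \<Longrightarrow> card (VH 4) \<le> card (VH b)"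
  by (rule mono_m) auto

lemma S4:
  assumes u: "u \<in> VH (3*p-3)" and l: "l < 3" and j: "2 \<le> j" "j < p"
  shows "s (Inr (3*p-3, u)) < s (spv l j)"
proof -
  define q where "q = 3*p-3"
  have q: "q \<in> {1..3*p}" "4 \<le> q" unfolding q_def using p3 by auto
  have uq: "u \<in> VH q" using u q_def by simp
  note F = inH_facts[OF q(1) uq]
  define b where "b = 3*(p-j)+l+1"
  define a where "a = 3*(p-(j+1))+l+1"
  note SP = sp_inner[OF l _ j(2), folded b_def a_def]
  have j1: "1 \<le> j" using j by simp
  have Isp: "I (spv l j) = {Sp l j, Sp l (Suc j)} \<union> Es b ` VH b \<union> Cs a ` VH a" using SP(1)[OF j1] .
  have bb: "b \<in> {1..3*p}" "4 \<le> b" "b \<le> 3*p-3" unfolding b_def using j l by auto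
  note Fb = img_facts[OF bb(1)]
  define A where "A = insert (Cs q u) (inH q u)"
  have IA: "I (Inr (q, u)) = insert (Es q u) A" unfolding A_def F(8) by auto
  have EA: "Es q u \<notin> A" unfolding A_def using F by auto
  have sub: "insert (Sp l j) (Es b ` VH b) \<subseteq> I (spv l j)" unfolding Isp by auto
  have "sum lab A < sum lab (Es b ` VH b)"
  proof (rule domT)
    show "A \<subseteq> K" unfolding A_def using F by auto
    show "Es b ` VH b \<subseteq> K" "Es b ` VH b \<noteq> {}" using Fb by auto
    have "degree E (Inr (q, u)) \<le> max_degree' p VH EH q"
      unfolding max_degree'_def using finVH[OF q(1)] uq by simp
    then have "degree (EH q) u + 2 \<le> card (VH 4) + 1" using c3 degE_H[OF q(1) uq] q_def by simp
    then have "card A \<le> card (VH 4)" unfolding A_def using F by simp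
    also have "\<dots> \<le> card (VH b)" using m4b bb by auto
    finally show "card A \<le> card (Es b ` VH b)" using Fb by simp
    fix x y assume "x \<in> A" "y \<in> Es b ` VH b"
    then show "tier p x < tier p y" unfolding A_def using F(9) q bb q_def by auto
  qed
  then have "sum lab A + lab (Es q u) < sum lab (Es b ` VH b) + lab (Sp l j)"
  proof -
    have "lab (Es q u) < lab (Sp l j)"
    proof (rule lab_mono)
      show "Es q u \<in> K" using F by simp
      show "Sp l j \<in> K" using Isp IK by blast
      show "tier p (Es q u) < tier p (Sp l j)" using j l q q_def by auto
    qed
    then show "sum lab A < sum lab (Es b ` VH b) \<Longrightarrow> ?thesis" by simp
  qed
  moreover have "s (Inr (q, u)) = sum lab A + lab (Es q u)" unfolding s_def IA
    using F EA unfolding A_def by simp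
  moreover have "sum lab (Es b ` VH b) + lab (Sp l j) \<le> s (spv l j)"
  proof -
    have "sum lab (insert (Sp l j) (Es b ` VH b)) = lab (Sp l j) + sum lab (Es b ` VH b)"
      using Fb by (subst sum.insert) auto
    then show ?thesis using sum_sub[OF sub] by simp
  qed
  ultimately show ?thesis using q_def by simp
qed

end

context ctx
begin

lemma inner_card:
  assumes l: "l < 3" and j: "2 \<le> j" "j < p"
  shows "card (I (spv l j)) \<le> min_degree' p VH EH (3*p-2)"
proof -
  have j1: "1 \<le> j" using j by simp
  have p22: "(2::nat) < p" using p by simp
  have "card (I (spv l j)) = 2 + card (VH (3*(p-j)+l+1)) + card (VH (3*(p-(j+1))+l+1))"
    using sp_inner(3)[OF l j1 j(2)] .
  also have "\<dots> \<le> 2 + card (VH (3*(p-2)+2+1)) + card (VH (3*(p-(2+1))+2+1))"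
  proof -
    have "card (VH (3*(p-j)+l+1)) \<le> card (VH (3*(p-2)+2+1))" using l j by (intro mono_m) auto
    moreover have "card (VH (3*(p-(j+1))+l+1)) \<le> card (VH (3*(p-(2+1))+2+1))" using l j by (intro mono_m) auto
    ultimately show ?thesis by simp
  qed
  also have "\<dots> = card (I (spv 2 2))" using sp_inner(3)[of 2 2] p22 by simp
  also have "\<dots> = degree E (spv 2 2)" using deg_I by simp
  also have "\<dots> \<le> min_degree' p VH EH (3*p-2)" using c4 .
  finally show ?thesis .
qed

lemma inner_tier:
  assumes l: "l < 3" and j: "2 \<le> j" "j < p" and k: "k \<in> I (spv l j)"
  shows "tier p k < 13 + 12*p"
proof -
  have j1: "1 \<le> j" using j by simp
  have "k \<in> {Sp l j, Sp l (Suc j)} \<union> Es (3*(p-j)+l+1) ` VH (3*(p-j)+l+1) \<union> Cs (3*(p-(j+1))+l+1) ` VH (3*(p-(j+1))+l+1)"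
    using sp_inner(1)[OF l j1 j(2)] k by simp
  then show ?thesis using l j by auto
qed

lemma mindeg_le:
  assumes i: "3*p-2 \<le> i" "i \<le> 3*p" and w: "w \<in> VH i"
  shows "min_degree' p VH EH (3*p-2) \<le> degree (EH i) w + 2"
proof -
  have i0: "3*p-2 \<in> {1..3*p}" using p by auto
  obtain a0 where a0: "a0 \<in> VH (3*p-2)" "degree (EH (3*p-2)) a0 \<le> degree (EH i) w"
  proof (cases "i = 3*p-2")
    case True
    then show ?thesis using that w by auto
  next
    case False
    obtain a0 where "a0 \<in> VH (3*p-2)" using VH_ne[OF i0] by blast
    moreover have "degree (EH (3*p-2)) a0 \<le> degree (EH i) w"
      using deg_mono[of "3*p-2" i a0 w] calculation False i w p by auto
    ultimately show ?thesis using that by blast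
  qed
  have "min_degree' p VH EH (3*p-2) \<le> degree E (Inr (3*p-2, a0))"
    unfolding min_degree'_def using finVH[OF i0] a0 by simp
  also have "\<dots> = degree (EH (3*p-2)) a0 + 2" using degE_H[OF i0 a0(1)] .
  finally show ?thesis using a0 by simp
qed

lemma mindeg_le2: "min_degree' p VH EH (3*p-2) \<le> card (VH (3*p-2)) + 1"
proof -
  have i0: "3*p-2 \<in> {1..3*p}" using p by auto
  obtain a0 where a0: "a0 \<in> VH (3*p-2)" using VH_ne[OF i0] by blast
  have "min_degree' p VH EH (3*p-2) \<le> degree E (Inr (3*p-2, a0))"
    unfolding min_degree'_def using finVH[OF i0] a0 by simp
  also have "\<dots> = degree (EH (3*p-2)) a0 + 2" using degE_H[OF i0 a0] .
  finally show ?thesis using degH_le[OF i0 a0] by simp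
qed

lemma S5a:
  assumes l: "l < 3" and j: "2 \<le> j" "j < p" and i: "3*p-2 \<le> i" "i \<le> 3*p" and w: "w \<in> VH i"
  shows "s (spv l j) < s (Inr (i, w))"
proof -
  have i': "i \<in> {1..3*p}" using i p by auto
  note F = inH_facts[OF i' w]
  have "sum lab (I (spv l j)) < sum lab (I (Inr (i, w)))"
  proof (rule domT[OF IK IK])
    have "card (I (spv l j)) \<le> min_degree' p VH EH (3*p-2)" using inner_card[OF l j] .
    also have "\<dots> \<le> degree (EH i) w + 2" using mindeg_le[OF i w] .
    also have "\<dots> = card (I (Inr (i, w)))" using s_H(2)[OF i' w] by simp
    finally show "card (I (spv l j)) \<le> card (I (Inr (i, w)))" .
    show "I (Inr (i, w)) \<noteq> {}" using F(8) by auto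
    fix x y assume x: "x \<in> I (spv l j)" and y: "y \<in> I (Inr (i, w))"
    have "tier p x < 13 + 12*p" using inner_tier[OF l j x] .
    moreover have "tier p y \<ge> 13 + 12*p" using y F(9) i p unfolding F(8) by auto
    ultimately show "tier p x < tier p y" by simp
  qed
  then show ?thesis unfolding s_def .
qed

lemma S5b:
  assumes l: "l < 3" and j: "2 \<le> j" "j < p" and l': "l' < 3"
  shows "s (spv l j) < s (spv l' 1)"
proof -
  define b where "b = 3*(p-1)+l'+1"
  have p1: "1 < p" using p by simp
  have Isp: "I (spv l' 1) = {Sp l' 1, Sp l' (Suc 1)} \<union> Es b ` VH b \<union> Cs (3*(p-(1+1))+l'+1) ` VH (3*(p-(1+1))+l'+1)"
    using sp_inner(1)[OF l' order_refl p1] unfolding b_def .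
  have bb: "b \<in> {1..3*p}" "3*p-2 \<le> b" unfolding b_def using l' p by auto
  note Fb = img_facts[OF bb(1)]
  define B where "B = insert (Sp l' 1) (Es b ` VH b)"
  have BI: "B \<subseteq> I (spv l' 1)" unfolding B_def Isp by auto
  have "sum lab (I (spv l j)) < sum lab B"
  proof (rule domT[OF IK])
    show "B \<subseteq> K" using BI IK by blast
    show "B \<noteq> {}" unfolding B_def by simp
    have "card (I (spv l j)) \<le> min_degree' p VH EH (3*p-2)" using inner_card[OF l j] .
    also have "\<dots> \<le> card (VH (3*p-2)) + 1" using mindeg_le2 .
    also have "\<dots> \<le> card (VH b) + 1" using mono_m[of "3*p-2" b] bb p by simp
    also have "\<dots> = card B" unfolding B_def using Fb by (subst card_insert_disjoint) auto
    finally show "card (I (spv l j)) \<le> card B" .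
    fix x y assume x: "x \<in> I (spv l j)" and y: "y \<in> B"
    have "tier p x < 13 + 12*p" using inner_tier[OF l j x] .
    moreover have "tier p y \<ge> 13 + 12*p" using y bb l' p unfolding B_def by auto
    ultimately show "tier p x < tier p y" by simp
  qed
  also have "\<dots> \<le> s (spv l' 1)" using sum_sub[OF BI] .
  finally show ?thesis unfolding s_def .
qed

end

context ctx
begin

lemma v0_tier: "k \<in> I (spv 0 0) \<Longrightarrow> tier p k = 14 + 12*p"
  unfolding I_0 using p by auto

lemma I0_card: "2 + card (VH (3*p)) + card (VH (3*p-1)) \<le> card (I (spv 0 0))"
proof -
  have i1: "3*p \<in> {1..3*p}" "3*p-1 \<in> {1..3*p}" using p by auto
  note F1 = img_facts[OF i1(1)] and F2 = img_facts[OF i1(2)]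
  define S where "S = insert (Sp 0 1) (insert (Sp 1 1) (Cs (3*p) ` VH (3*p) \<union> Cs (3*p-1) ` VH (3*p-1)))"
  have u1: "Cs (3*p) ` VH (3*p) \<subseteq> (\<Union>i\<in>{3*p-2..3*p}. Cs i ` VH i)" by (rule UN_upper) (use p in auto)
  have u2: "Cs (3*p-1) ` VH (3*p-1) \<subseteq> (\<Union>i\<in>{3*p-2..3*p}. Cs i ` VH i)" by (rule UN_upper) (use p in auto)
  have "S \<subseteq> I (spv 0 0)" unfolding S_def I_0 using u1 u2 by auto
  then have "card S \<le> card (I (spv 0 0))" using finI by (rule card_mono[rotated])
  moreover have "card S = 2 + card (VH (3*p)) + card (VH (3*p-1))"
  proof -
    have d: "Cs (3*p) ` VH (3*p) \<inter> Cs (3*p-1) ` VH (3*p-1) = {}" using p by auto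
    have "card (Cs (3*p) ` VH (3*p) \<union> Cs (3*p-1) ` VH (3*p-1)) = card (VH (3*p)) + card (VH (3*p-1))"
      using card_Un_disjoint[OF F1(6) F2(6) d] F1 F2 by simp
    moreover have "finite (Cs (3*p) ` VH (3*p) \<union> Cs (3*p-1) ` VH (3*p-1))" using F1 F2 by simp
    moreover have "Sp 1 1 \<notin> Cs (3*p) ` VH (3*p) \<union> Cs (3*p-1) ` VH (3*p-1)" by auto
    moreover have "Sp 0 1 \<notin> insert (Sp 1 1) (Cs (3*p) ` VH (3*p) \<union> Cs (3*p-1) ` VH (3*p-1))" by auto
    ultimately show ?thesis unfolding S_def by simp
  qed
  ultimately show ?thesis by simp
qed

lemma S6a:
  assumes i: "3*p-2 \<le> i" "i \<le> 3*p" and w: "w \<in> VH i"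
  shows "s (Inr (i, w)) < s (spv 0 0)"
proof -
  have i': "i \<in> {1..3*p}" using i p by auto
  note F = inH_facts[OF i' w]
  define A where "A = insert (Es i w) (inH i w)"
  define B where "B = I (spv 0 0) - {Cs i w}"
  have tI: "Cs i w \<in> I (spv 0 0)" unfolding I_0 using i w by auto
  show ?thesis
  proof (rule cmp_shared)
    show "I (Inr (i, w)) = insert (Cs i w) A" unfolding A_def F(8) by auto
    show "Cs i w \<notin> A" unfolding A_def using F by auto
    show "insert (Cs i w) B \<subseteq> I (spv 0 0)" unfolding B_def using tI by auto
    show "Cs i w \<notin> B" unfolding B_def by auto
    show "sum lab A < sum lab B"
    proof (rule domT)
      show "A \<subseteq> K" unfolding A_def using F by auto
      show "B \<subseteq> K" unfolding B_def using IK by auto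
      have "card A = degree (EH i) w + 1" unfolding A_def using F by simp
      also have "\<dots> \<le> card (VH i)" using degH_le[OF i' w] .
      also have "\<dots> \<le> card (VH (3*p))" using mono_m[of i "3*p"] i' by simp
      also have "\<dots> \<le> card B"
      proof -
        have "card B = card (I (spv 0 0)) - 1" unfolding B_def using tI finI by simp
        then show ?thesis using I0_card two[of "3*p-1"] p by simp
      qed
      finally show "card A \<le> card B" .
      show "B \<noteq> {}"
      proof -
        have "card B > 0" using \<open>card A \<le> card B\<close> unfolding A_def using F by simp
        then show ?thesis by auto
      qed
      fix x y assume x: "x \<in> A" and y: "y \<in> B"
      have "tier p y = 14 + 12*p" using y v0_tier unfolding B_def by auto
      moreover have "tier p x = 13 + 12*p" using x F(9) i p unfolding A_def by auto
      ultimately show "tier p x < tier p y" by simp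
    qed
  qed
qed

lemma S6b:
  assumes l: "l < 3"
  shows "s (spv l 1) < s (spv 0 0)"
proof -
  have p1: "1 < p" using p by simp
  define b where "b = 3*(p-1)+l+1"
  define a where "a = 3*(p-(1+1))+l+1"
  have Isp: "I (spv l 1) = {Sp l 1, Sp l (Suc 1)} \<union> Es b ` VH b \<union> Cs a ` VH a"
    using sp_inner(1)[OF l order_refl p1] unfolding b_def a_def .
  have cI: "card (I (spv l 1)) = 2 + card (VH b) + card (VH a)"
    using sp_inner(3)[OF l order_refl p1] unfolding b_def a_def .
  have ab: "b \<in> {1..3*p}" "a \<in> {1..3*p}" "3*p-2 \<le> b" "a \<le> 3*p-3" "4 \<le> a" unfolding a_def b_def using l p by auto
  define A where "A = I (spv l 1) - {Sp l 1}"
  define B where "B = I (spv 0 0) - {Sp l 1}"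
  have tI: "Sp l 1 \<in> I (spv 0 0)" unfolding I_0 using l by auto
  have tI2: "Sp l 1 \<in> I (spv l 1)" unfolding Isp by auto
  show ?thesis
  proof (rule cmp_shared)
    show "I (spv l 1) = insert (Sp l 1) A" unfolding A_def using tI2 by auto
    show "Sp l 1 \<notin> A" unfolding A_def by auto
    show "insert (Sp l 1) B \<subseteq> I (spv 0 0)" unfolding B_def using tI by auto
    show "Sp l 1 \<notin> B" unfolding B_def by auto
    show "sum lab A < sum lab B"
    proof (rule domT)
      show "A \<subseteq> K" unfolding A_def using IK by auto
      show "B \<subseteq> K" unfolding B_def using IK by auto
      have cA: "card A = 1 + card (VH b) + card (VH a)" unfolding A_def using cI tI2 finI by simp
      have "card (VH b) \<le> card (VH (3*p))" using mono_m[of b "3*p"] ab by simp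
      moreover have "card (VH a) \<le> card (VH (3*p-1))" using mono_m[of a "3*p-1"] ab by simp
      moreover have "card B = card (I (spv 0 0)) - 1" unfolding B_def using tI finI by simp
      ultimately show "card A \<le> card B" using cA I0_card by simp
      then show "B \<noteq> {}" using cA by auto
      fix x y assume x: "x \<in> A" and y: "y \<in> B"
      have "tier p y = 14 + 12*p" using y v0_tier unfolding B_def by auto
      moreover have "tier p x < 14 + 12*p" using x ab l p3 unfolding A_def Isp by (auto split: if_splits)
      ultimately show "tier p x < tier p y" by simp
    qed
  qed
qed

lemma W_gen:
  assumes tx: "tx \<in> K" and ty: "ty \<in> K"
    and Sx: "{k \<in> I x. srt p k} = {tx}" and Sy: "{k \<in> I y. srt p k} = {ty}"
    and tt: "tier p tx = tier p ty" and ox: "own tx = x" and oy: "own ty = y" and xy: "x \<noteq> y"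
  shows "s x \<noteq> s y"
proof -
  have sx: "srt p tx" "tx \<in> I x" using Sx by auto
  have sy: "srt p ty" "ty \<in> I y" using Sy by auto
  have sv: "s v = P1 v + lab t" if S: "{k \<in> I v. srt p k} = {t}" for v t
  proof -
    have t: "t \<in> I v" "srt p t" using S by auto
    have split: "I v = {k \<in> I v. \<not> srt p k} \<union> {t}" using S by auto
    have "s v = sum lab {k \<in> I v. \<not> srt p k} + sum lab {t}"
      unfolding s_def by (subst split, rule sum.union_disjoint) (use finI t in auto)
    moreover have "sum lab {k \<in> I v. \<not> srt p k} = P1 v"
      unfolding P1_def by (rule sum.cong) (use IK lab_unsorted in auto)
    ultimately show ?thesis by simp
  qed
  have ex: "s x = P1 x + lab tx" using sv[OF Sx] .
  have ey: "s y = P1 y + lab ty" using sv[OF Sy] .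
  have "tx \<noteq> ty" using ox oy xy by auto
  then have ln: "lab tx \<noteq> lab ty" using lab_inj tx ty by (auto simp: inj_on_def)
  consider "P1 x < P1 y" | "P1 y < P1 x" | "P1 x = P1 y" by linarith
  then show ?thesis
  proof cases
    case 1
    then have "lab tx < lab ty" using lab_sort[OF tx ty sx(1) sy(1) tt] ox oy by simp
    then show ?thesis using ex ey 1 by simp
  next
    case 2
    then have "lab ty < lab tx" using lab_sort[OF ty tx sy(1) sx(1) tt[symmetric]] ox oy by simp
    then show ?thesis using ex ey 2 by simp
  next
    case 3
    then show ?thesis using ex ey ln by simp
  qed
qed

lemma W1:
  assumes i: "1 \<le> i" "i \<le> 3*p-3" and u: "u \<in> VH i" and w: "w \<in> VH i" and uw: "u \<noteq> w"
  shows "s (Inr (i, u)) \<noteq> s (Inr (i, w))"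
proof (rule W_gen)
  have i': "i \<in> {1..3*p}" using i by auto
  note Fu = inH_facts[OF i' u] and Fw = inH_facts[OF i' w]
  show "Es i u \<in> K" "Es i w \<in> K" using Fu Fw by auto
  show "{k \<in> I (Inr (i, u)). srt p k} = {Es i u}" unfolding Fu(8) inH_def using i by auto
  show "{k \<in> I (Inr (i, w)). srt p k} = {Es i w}" unfolding Fw(8) inH_def using i by auto
qed (use uw in auto)

definition Xv :: "(nat \<times> nat) + (nat \<times> 'a) \<Rightarrow> bool" where
  "Xv x \<longleftrightarrow> (\<exists>i w. 3*p-2 \<le> i \<and> i \<le> 3*p \<and> w \<in> VH i \<and> x = Inr (i, w)) \<or> (\<exists>l<3. x = spv l 1)"

lemma X_t:
  assumes "Xv x"
  shows "\<exists>t\<in>K. {k \<in> I x. srt p k} = {t} \<and> tier p t = 14 + 12*p \<and> own t = x"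
proof -
  from assms consider (h) i w where "3*p-2 \<le> i" "i \<le> 3*p" "w \<in> VH i" "x = Inr (i, w)"
    | (s) l where "l < 3" "x = spv l 1" unfolding Xv_def by blast
  then show ?thesis
  proof cases
    case h
    have i': "i \<in> {1..3*p}" using h p by auto
    note F = inH_facts[OF i' h(3)]
    have "{k \<in> I x. srt p k} = {Cs i w}" unfolding h(4) F(8) inH_def using h p by auto
    moreover have "tier p (Cs i w) = 14 + 12*p" using h p by auto
    ultimately show ?thesis using F h by auto
  next
    case s
    have p1: "1 < p" using p by simp
    have Isp: "I (spv l 1) = {Sp l 1, Sp l (Suc 1)} \<union> Es (3*(p-1)+l+1) ` VH (3*(p-1)+l+1)
       \<union> Cs (3*(p-(1+1))+l+1) ` VH (3*(p-(1+1))+l+1)"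
      using sp_inner(1)[OF s(1) order_refl p1] .
    have "{k \<in> I x. srt p k} = {Sp l 1}" unfolding s(2) Isp using p s(1) by auto
    moreover have "tier p (Sp l 1) = 14 + 12*p" using p s(1) by auto
    moreover have "Sp l 1 \<in> K" using Isp IK by auto
    ultimately show ?thesis using s by auto
  qed
qed

lemma W3: "Xv x \<Longrightarrow> Xv y \<Longrightarrow> x \<noteq> y \<Longrightarrow> s x \<noteq> s y"
proof -
  assume "Xv x" "Xv y" "x \<noteq> y"
  obtain tx where tx: "tx \<in> K" "{k \<in> I x. srt p k} = {tx}" "tier p tx = 14 + 12*p" "own tx = x"
    using X_t[OF \<open>Xv x\<close>] by blast
  obtain ty where ty: "ty \<in> K" "{k \<in> I y. srt p k} = {ty}" "tier p ty = 14 + 12*p" "own ty = y"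
    using X_t[OF \<open>Xv y\<close>] by blast
  show ?thesis using W_gen[OF tx(1) ty(1) tx(2) ty(2) _ tx(4) ty(4) \<open>x \<noteq> y\<close>] tx(3) ty(3) by simp
qed

end

context ctx
begin

lemma inner_lt:
  assumes l: "l < 3" "l' < 3" and j: "2 \<le> j" "j < p" "2 \<le> j'" "j' < p"
    and r: "3*(p-j)+l < 3*(p-j')+l'"
  shows "s (spv l j) < s (spv l' j')"
proof -
  have j1: "1 \<le> j" "1 \<le> j'" using j by auto
  define b where "b = 3*(p-j)+l+1"
  define a where "a = 3*(p-(j+1))+l+1"
  define b' where "b' = 3*(p-j')+l'+1"
  define a' where "a' = 3*(p-(j'+1))+l'+1"
  note X = sp_inner[OF l(1) j1(1) j(2), folded b_def a_def]
  note Y = sp_inner[OF l(2) j1(2) j(4), folded b'_def a'_def]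
  have bb: "4 \<le> b" "b < b'" "b' \<le> 3*p-3" "1 \<le> a" "a < a'" "a' \<le> 3*p-6"
    unfolding a_def b_def a'_def b'_def using j l r by auto
  have SK: "Sp l j \<in> K" "Sp l (Suc j) \<in> K" "Sp l' j' \<in> K" "Sp l' (Suc j') \<in> K"
    using X(1) Y(1) IK by auto
  have c1: "lab (Sp l j) < lab (Sp l' j')"
  proof (rule lab_mono)
    show "Sp l j \<in> K" "Sp l' j' \<in> K" using SK by auto
    define rr where "rr = 3*(p - j)+l"
    define rr' where "rr' = 3*(p - j')+l'"
    have rr: "rr < rr'" "rr' \<le> 3*p-4" "3 \<le> rr" unfolding rr_def rr'_def using r j l by auto
    have t1: "tier p (Sp l j) = (if rr \<le> 2 then 4*rr+3 else if rr \<le> 3*p-4 then 13+9*p+rr else 14+12*p)"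
      unfolding rr_def by simp
    have t2: "tier p (Sp l' j') = (if rr' \<le> 2 then 4*rr'+3 else if rr' \<le> 3*p-4 then 13+9*p+rr' else 14+12*p)"
      unfolding rr'_def by simp
    show "tier p (Sp l j) < tier p (Sp l' j')" unfolding t1 t2 using rr by auto
  qed
  have c2: "lab (Sp l (Suc j)) < lab (Sp l' (Suc j'))"
  proof (rule lab_mono)
    show "Sp l (Suc j) \<in> K" "Sp l' (Suc j') \<in> K" using SK by auto
    define rr where "rr = 3*(p - Suc j)+l"
    define rr' where "rr' = 3*(p - Suc j')+l'"
    have rr: "rr < rr'" "rr' \<le> 3*p-4" unfolding rr_def rr'_def using r j l by auto
    have t1: "tier p (Sp l (Suc j)) = (if rr \<le> 2 then 4*rr+3 else if rr \<le> 3*p-4 then 13+9*p+rr else 14+12*p)"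
      unfolding rr_def by simp
    have t2: "tier p (Sp l' (Suc j')) = (if rr' \<le> 2 then 4*rr'+3 else if rr' \<le> 3*p-4 then 13+9*p+rr' else 14+12*p)"
      unfolding rr'_def by simp
    show "tier p (Sp l (Suc j)) < tier p (Sp l' (Suc j'))" unfolding t1 t2 using rr by auto
  qed
  note Fb = img_facts[OF X(4)] and Fb' = img_facts[OF Y(4)]
  note Fa = img_facts[OF X(5)] and Fa' = img_facts[OF Y(5)]
  have c3: "sum lab (Es b ` VH b) < sum lab (Es b' ` VH b')"
  proof (rule domT)
    show "Es b ` VH b \<subseteq> K" "Es b' ` VH b' \<subseteq> K" "Es b' ` VH b' \<noteq> {}" using Fb Fb' by auto
    show "card (Es b ` VH b) \<le> card (Es b' ` VH b')" using Fb Fb' mono_m[of b b'] bb by simp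
    fix x y assume "x \<in> Es b ` VH b" "y \<in> Es b' ` VH b'"
    then show "tier p x < tier p y" using bb by auto
  qed
  have c4: "sum lab (Cs a ` VH a) \<le> sum lab (Cs a' ` VH a')"
  proof (rule domT_le)
    show "Cs a ` VH a \<subseteq> K" "Cs a' ` VH a' \<subseteq> K" using Fa Fa' by auto
    show "card (Cs a ` VH a) \<le> card (Cs a' ` VH a')" using Fa Fa' mono_m[of a a'] bb by simp
    fix x y assume "x \<in> Cs a ` VH a" "y \<in> Cs a' ` VH a'"
    then show "tier p x < tier p y" using bb by auto
  qed
  show ?thesis unfolding X(2) Y(2) using c1 c2 c3 c4 by simp
qed

lemma inner_r_inj:
  assumes "l < 3" "l' < 3" "j \<le> p" "j' \<le> p" "3*(p-j)+l = 3*(p-j')+l'"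
  shows "l = l' \<and> j = j'"
proof -
  have "l = (3*(p-j)+l) mod 3" using assms(1) by auto
  also have "\<dots> = (3*(p-j')+l') mod 3" using assms(5) by simp
  also have "\<dots> = l'" using assms(2) by auto
  finally have "l = l'" .
  then have "p - j = p - j'" using assms(5) by simp
  then show ?thesis using \<open>l = l'\<close> assms by auto
qed

abbreviation "V \<equiv> corona_V p VH"

lemma V_cases:
  assumes "v \<in> V"
  obtains (v0) "v = Inl (0, 0)"
  | (sp) l j where "l < 3" "1 \<le> j" "j \<le> p" "v = Inl (l, j)"
  | (h) i x where "i \<in> {1..3*p}" "x \<in> VH i" "v = Inr (i, x)"
proof -
  from assms consider (a) l j where "l < 3" "j \<le> p" "v = spv l j"
    | (b) i x where "i \<in> {1..3*p}" "x \<in> VH i" "v = Inr (i, x)"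
    unfolding corona_V_def by blast
  then show ?thesis
  proof cases
    case a
    then show ?thesis using that by (cases "j = 0") (auto simp: spv_def)
  next
    case b
    then show ?thesis using that by blast
  qed
qed

lemma V_mem:
  "Inl (0, 0) \<in> V"
  "l < 3 \<Longrightarrow> 1 \<le> j \<Longrightarrow> j \<le> p \<Longrightarrow> Inl (l, j) \<in> V"
  "i \<in> {1..3*p} \<Longrightarrow> x \<in> VH i \<Longrightarrow> Inr (i, x) \<in> V"
proof -
  have "(spv 0 0 :: (nat \<times> nat) + (nat \<times> 'a)) \<in> {spv l j | l j. l < 3 \<and> j \<le> p}"
    by (rule CollectI, rule exI[of _ 0], rule exI[of _ 0]) simp
  then have "(spv 0 0 :: (nat \<times> nat) + (nat \<times> 'a)) \<in> V" unfolding corona_V_def by (rule UnI1)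
  then show "Inl (0, 0) \<in> V" by simp
  show "l < 3 \<Longrightarrow> 1 \<le> j \<Longrightarrow> j \<le> p \<Longrightarrow> Inl (l, j) \<in> V"
  proof -
    assume h: "l < 3" "1 \<le> j" "j \<le> p"
    then have "(spv l j :: (nat \<times> nat) + (nat \<times> 'a)) \<in> {spv l j | l j. l < 3 \<and> j \<le> p}"
      by (intro CollectI exI conjI) auto
    then have "(spv l j :: (nat \<times> nat) + (nat \<times> 'a)) \<in> V" unfolding corona_V_def by (rule UnI1)
    then show ?thesis using h by (simp add: spv_pos)
  qed
  show "i \<in> {1..3*p} \<Longrightarrow> x \<in> VH i \<Longrightarrow> Inr (i, x) \<in> V" unfolding corona_V_def by blast
qed

definition cls :: "(nat \<times> nat) + (nat \<times> 'a) \<Rightarrow> nat" where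
  "cls v = (case v of Inr (i, x) \<Rightarrow> (if i \<le> 3 then 2*(i-1) else if i \<le> 3*p-3 then i+2 else 3*p+1)
     | Inl (l, j) \<Rightarrow> (if j = 0 then 3*p+2 else if j = p then 2*l+1 else if 2 \<le> j then 3*p else 3*p+1))"

lemma cls_simps:
  "cls (Inr (i, x)) = (if i \<le> 3 then 2*(i-1) else if i \<le> 3*p-3 then i+2 else 3*p+1)"
  "cls (Inl (l, j)) = (if j = 0 then 3*p+2 else if j = p then 2*l+1 else if 2 \<le> j then 3*p else 3*p+1)"
  unfolding cls_def by simp_all

end

context ctx
begin

lemma cls_le: "v \<in> V \<Longrightarrow> cls v \<le> 3*p+2"
  by (cases rule: V_cases) (auto simp: cls_simps)

lemma step:
  assumes u: "u \<in> V" and w: "w \<in> V" and c: "cls w = Suc (cls u)"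
  shows "s u < s w"
  using u
proof (cases rule: V_cases)
  case v0
  then show ?thesis using cls_le[OF w] c by (simp add: cls_simps)
next
  case (sp l j)
  note uu = sp
  from w show ?thesis
  proof (cases rule: V_cases)
    case v0
    have "j = 1" using c uu v0 p by (auto simp: cls_simps split: if_splits; presburger?)
    then show ?thesis using S6b[OF uu(1)] uu v0 by (simp add: spv_pos)
  next
    case (sp l' j')
    have "2 \<le> j \<and> j < p \<and> j' = 1" using c uu sp p by (auto simp: cls_simps split: if_splits; presburger?)
    then show ?thesis using S5b[OF uu(1) _ _ sp(1)] uu sp by (simp add: spv_pos)
  next
    case (h i y)
    have "(j = p \<and> i = l + 2) \<or> (2 \<le> j \<and> j < p \<and> 3*p-2 \<le> i)"
      using c uu h p by (auto simp: cls_simps split: if_splits; presburger?)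
    then show ?thesis
    proof
      assume a: "j = p \<and> i = l + 2"
      have l3: "l+1 \<in> {1,2,3}" using uu by auto
      have y: "y \<in> VH (l+1+1)" using h a by simp
      have c2: "degree E (spv (l+1-1) p) \<le> min_degree' p VH EH (l+1+1)"
        using c2x c2y c2z uu(1) by (cases l) (auto simp: numeral_eq_Suc less_Suc_eq)
      have "s (spv (l+1-1) p) < s (Inr (l+1+1, y))" using S2[OF l3 y c2] .
      then show ?thesis using uu h a p by (simp add: spv_pos)
    next
      assume a: "2 \<le> j \<and> j < p \<and> 3*p-2 \<le> i"
      have "s (spv l j) < s (Inr (i, y))" using S5a[OF uu(1)] a h by auto
      then show ?thesis using uu h a by (simp add: spv_pos)
    qed
  qed
next
  case (h i x)
  note uu = h
  from w show ?thesis
  proof (cases rule: V_cases)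
    case v0
    have "3*p-2 \<le> i" using c uu v0 p by (auto simp: cls_simps split: if_splits; presburger?)
    then show ?thesis using S6a[of i x] uu v0 by auto
  next
    case (sp l j)
    have "(i \<le> 3 \<and> l = i - 1 \<and> j = p) \<or> (i = 3*p-3 \<and> 2 \<le> j \<and> j < p)"
      using c uu sp p by (auto simp: cls_simps split: if_splits; presburger?)
    then show ?thesis
    proof
      assume a: "i \<le> 3 \<and> l = i - 1 \<and> j = p"
      have "i \<in> {1,2,3}" using a uu by auto
      then have "s (Inr (i, x)) < s (spv (i-1) p)" using S1 uu by auto
      then show ?thesis using uu sp a by (simp add: spv_pos)
    next
      assume a: "i = 3*p-3 \<and> 2 \<le> j \<and> j < p"
      have "s (Inr (3*p-3, x)) < s (spv l j)" using S4[of x l j] a uu sp by auto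
      then show ?thesis using uu sp a by (simp add: spv_pos)
    qed
  next
    case (h i' y)
    have "4 \<le> i \<and> i + 1 \<le> 3*p-3 \<and> i' = i + 1" using c uu h p by (auto simp: cls_simps split: if_splits; presburger?)
    then show ?thesis using S3[of i x y] uu h by auto
  qed
qed

end

context ctx
begin

lemma within:
  assumes u: "u \<in> V" and w: "w \<in> V" and c: "cls u = cls w" and uw: "u \<noteq> w"
  shows "s u \<noteq> s w"
  using u
proof (cases rule: V_cases)
  case v0
  from w show ?thesis
  proof (cases rule: V_cases)
    case v0
    then show ?thesis using \<open>u = Inl (0, 0)\<close> uw by simp
  next
    case (sp l j)
    then show ?thesis using c \<open>u = Inl (0, 0)\<close> p by (auto simp: cls_simps split: if_splits)
  next
    case (h i y)
    then show ?thesis using c \<open>u = Inl (0, 0)\<close> p by (auto simp: cls_simps split: if_splits)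
  qed
next
  case (sp l j)
  note uu = sp
  from w show ?thesis
  proof (cases rule: V_cases)
    case v0
    then show ?thesis using c uu p by (auto simp: cls_simps split: if_splits)
  next
    case (sp l' j')
    have "(j = p \<and> j' = p \<and> l = l') \<or> (2 \<le> j \<and> j < p \<and> 2 \<le> j' \<and> j' < p) \<or> (j = 1 \<and> j' = 1)"
      using c uu sp p by (auto simp: cls_simps split: if_splits)
    moreover
    {
      assume a: "2 \<le> j \<and> j < p \<and> 2 \<le> j' \<and> j' < p"
      have "3*(p-j)+l \<noteq> 3*(p-j')+l'"
        using inner_r_inj[of l l' j j'] uu sp a uw by auto
      then consider "3*(p-j)+l < 3*(p-j')+l'" | "3*(p-j')+l' < 3*(p-j)+l" by linarith
      then have "s (spv l j) \<noteq> s (spv l' j')"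
      proof cases
        case 1 then show ?thesis using inner_lt[of l l' j j'] uu sp a by auto
      next
        case 2 then show ?thesis using inner_lt[of l' l j' j] uu sp a by auto
      qed
      then have ?thesis using uu sp a by (simp add: spv_pos)
    }
    moreover
    {
      assume a: "j = 1 \<and> j' = 1"
      have "Xv u" "Xv w" unfolding Xv_def using uu sp a by (auto simp: spv_pos)
      then have ?thesis using W3 uw by blast
    }
    ultimately show ?thesis using uu sp uw by auto
  next
    case (h i y)
    have "j = 1 \<and> 3*p-2 \<le> i" using c uu h p by (auto simp: cls_simps split: if_splits; presburger?)
    then have "Xv u" "Xv w" unfolding Xv_def using uu h by (auto simp: spv_pos)
    then show ?thesis using W3 uw by blast
  qed
next
  case (h i x)
  note uu = h
  from w show ?thesis
  proof (cases rule: V_cases)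
    case v0
    then show ?thesis using c uu p by (auto simp: cls_simps split: if_splits)
  next
    case (sp l j)
    have "j = 1 \<and> 3*p-2 \<le> i" using c uu sp p by (auto simp: cls_simps split: if_splits; presburger?)
    then have "Xv u" "Xv w" unfolding Xv_def using uu sp by (auto simp: spv_pos)
    then show ?thesis using W3 uw by blast
  next
    case (h i' y)
    have "(i = i' \<and> i \<le> 3*p-3) \<or> (3*p-2 \<le> i \<and> 3*p-2 \<le> i')"
      using c uu h p by (auto simp: cls_simps split: if_splits)
    then show ?thesis
    proof
      assume a: "i = i' \<and> i \<le> 3*p-3"
      then have "x \<noteq> y" using uw uu h by auto
      then show ?thesis using W1[of i x y] a uu h by auto
    next
      assume a: "3*p-2 \<le> i \<and> 3*p-2 \<le> i'"
      then have "Xv u" "Xv w" unfolding Xv_def using uu h by auto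
      then show ?thesis using W3 uw by blast
    qed
  qed
qed

lemma nonempty_cls:
  assumes "c \<le> 3*p+2"
  shows "\<exists>v\<in>V. cls v = c"
proof -
  have ne: "\<And>i. i \<in> {1..3*p} \<Longrightarrow> \<exists>x. x \<in> VH i" using VH_ne by blast
  have hv: "\<exists>v\<in>V. cls v = c" if hi: "i \<in> {1..3*p}" and hc: "cls (Inr (i, undefined)) = c" for i
  proof -
    obtain x where x: "x \<in> VH i" using ne[OF hi] by blast
    have "cls (Inr (i, x)) = c" using hc by (simp add: cls_simps)
    then show ?thesis using V_mem(3)[OF hi x] by blast
  qed
  have sv: "\<exists>v\<in>V. cls v = c" if "l < 3" "1 \<le> j" "j \<le> p" "cls (Inl (l, j)) = c" for l j
    using V_mem(2)[OF that(1-3)] that(4) by blast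
  consider "c = 0" | "c = 1" | "c = 2" | "c = 3" | "c = 4" | "c = 5" | "6 \<le> c \<and> c \<le> 3*p-1"
    | "c = 3*p" | "c = 3*p+1" | "c = 3*p+2" using assms by linarith
  then show ?thesis
  proof cases
    case 1 then show ?thesis using hv[of 1] p by (simp add: cls_simps)
  next
    case 2 then show ?thesis using sv[of 0 p] p by (simp add: cls_simps)
  next
    case 3 then show ?thesis using hv[of 2] p by (simp add: cls_simps)
  next
    case 4 then show ?thesis using sv[of 1 p] p by (simp add: cls_simps)
  next
    case 5 then show ?thesis using hv[of 3] p by (simp add: cls_simps)
  next
    case 6 then show ?thesis using sv[of 2 p] p by (simp add: cls_simps)
  next
    case 7
    have a: "c - 2 \<in> {1..3*p}" using 7 by auto
    have b: "cls (Inr (c - 2, undefined)) = c" using 7 by (auto simp: cls_simps)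
    show ?thesis using hv[OF a b] .
  next
    case 8 then show ?thesis using sv[of 0 2] p by (simp add: cls_simps)
  next
    case 9 then show ?thesis using sv[of 0 1] p by (simp add: cls_simps)
  next
    case 10
    have "cls (Inl (0, 0) :: (nat \<times> nat) + (nat \<times> 'a)) = c" using 10 by (simp add: cls_simps)
    then show ?thesis using V_mem(1) by blast
  qed
qed

lemma chain: "u \<in> V \<Longrightarrow> w \<in> V \<Longrightarrow> cls w = cls u + Suc d \<Longrightarrow> s u < s w"
proof (induction d arbitrary: w)
  case 0
  then show ?case using step by simp
next
  case (Suc d)
  have "cls u + Suc d \<le> 3*p+2" using cls_le[OF Suc.prems(2)] Suc.prems(3) by simp
  then obtain v where v: "v \<in> V" "cls v = cls u + Suc d" using nonempty_cls by blast
  have "s u < s v" using Suc.IH[OF Suc.prems(1) v(1) v(2)] .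
  also have "s v < s w" using step[OF v(1) Suc.prems(2)] Suc.prems(3) v(2) by simp
  finally show ?case .
qed

lemma s_inj: "inj_on s V"
proof (rule inj_onI)
  fix u w assume u: "u \<in> V" and w: "w \<in> V" and e: "s u = s w"
  show "u = w"
  proof (rule ccontr)
    assume uw: "u \<noteq> w"
    consider "cls u = cls w" | "cls u < cls w" | "cls w < cls u" by linarith
    then show False
    proof cases
      case 1 then show ?thesis using within[OF u w _ uw] e by simp
    next
      case 2
      then obtain d where "cls w = cls u + Suc d" using less_iff_Suc_add by auto
      then show ?thesis using chain[OF u w] e by simp
    next
      case 3
      then obtain d where "cls u = cls w + Suc d" using less_iff_Suc_add by auto
      then show ?thesis using chain[OF w u] e by simp
    qed
  qed
qed

lemma main: "antimagic (corona_V p VH) (corona_E p VH EH)"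
  using antimagic_of_s[OF s_inj] .

end

theorem theorem3:
  fixes p :: nat and VH :: "nat \<Rightarrow> 'a set" and EH :: "nat \<Rightarrow> 'a set set"
  assumes p: "p > 2"
    and graphs: "\<And>i. i \<in> {1..3*p} \<Longrightarrow> simple_graph (VH i) (EH i)"
    and conn: "\<And>i. i \<in> {1..3*p} \<Longrightarrow> graph_connected (VH i) (EH i)"
    and two: "\<And>i. i \<in> {1..3*p} \<Longrightarrow> card (VH i) \<ge> 2"
    and sorted: "\<And>i. i \<in> {1..<3*p} \<Longrightarrow> card (VH i) \<le> card (VH (Suc i))"
    and c1: "\<And>i. i \<in> {1..<3*p} \<Longrightarrow> max_degree (VH i) (EH i) \<le> min_degree (VH (Suc i)) (EH (Suc i))"
    and c2x: "degree (corona_E p VH EH) (spv 0 p) \<le> min_degree' p VH EH 2"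
    and c2y: "degree (corona_E p VH EH) (spv 1 p) \<le> min_degree' p VH EH 3"
    and c2z: "degree (corona_E p VH EH) (spv 2 p) \<le> min_degree' p VH EH 4"
    and c3: "max_degree' p VH EH (3*p - 3) \<le> card (VH 4) + 1"
    and c4: "degree (corona_E p VH EH) (spv 2 2) \<le> min_degree' p VH EH (3*p - 2)"
  shows "antimagic (corona_V p VH) (corona_E p VH EH)"
proof -
  have "ctx p VH EH"
    by (rule ctx.intro[OF p graphs two sorted c1 c2x c2y c2z c3 c4])
  then interpret ctx p VH EH .
  show ?thesis by (rule main)
qed

end
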